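(* Let $f:\{0,1,\dots,N-1\}\to\{0,1\}$, $t=|f^{-1}(1)|$, and $0<\varepsilon\le1$. The algorithm $\mathbf{Approx\_Count}(f,\varepsilon)$ outputs an integer $\tilde t$ with $|\tilde t-t|\le\varepsilon t$ with probability at least $2/3$, using an expected number of evaluations of $f$ in $\Theta\big(\frac1\varepsilon\sqrt{N/t}\big)$ when $t>0$. If $t=0$, it outputs $\tilde t=0$ with certainty and uses a number of evaluations of $f$ in $\Theta(\sqrt N)$.
   Context: For $M\ge1$, $\mathbf F_M|x\rangle=\frac{1}{\sqrt M}\sum_{y=0}^{M-1}e^{2\pi ixy/M}|y\rangle$. For a unitary $\mathbf U$, $\Lambda_M(\mathbf U)$ is $|j\rangle|y\rangle\mapsto|j\rangle(\mathbf U^j|y\rangle)$, $0\le j<M$. With $\mathcal A=\mathbf F_N$ on basis $|0\rangle,\dots,|N-1\rangle$, $\mathbf S_f|x\rangle=(-1)^{f(x)}|x\rangle$, $\mathbf S_0$ negating $|0\rangle$ and fixing other basis states, and $\mathbf Q=-\mathcal A\mathbf S_0\mathcal A^{-1}\mathbf S_f$: $\mathbf{Count}(f,M)$ prepares $|0\rangle\otimes\mathcal A|0\rangle$ (first register $M$-dimensional), applies $\mathbf F_M$ to the first register, then $\Lambda_M(\mathbf Q)$, then $\mathbf F_M^{-1}$ to the first register, measures the first register obtaining $y$, and outputs $N\sin^2(\pi y/M)$; a call $\mathbf{Count}(f,M)$ is counted as $M$ evaluations of $f$. Algorithm $\mathbf{Approx\_Count}(f,\varepsilon)$: (1) set $\ell=0$;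 (2) increase $\ell$ by 1; (3) set $t'=\mathbf{Count}(f,2^\ell)$; (4) if $t'=0$ and $2^\ell<2\sqrt N$, go to step (2); (5) set $M=\lceil\frac{20\pi^2}{\varepsilon}2^\ell\rceil$; (6) set $t'=\mathbf{Count}(f,M)$; (7) output an integer $\tilde t$ with $|\tilde t-t'|\le 2/3$. *)

theory Defs
  imports "HOL-Probability.Probability"
begin

text \<open>Vectors of a d-dimensional register are functions nat => complex, only the
  entries below d being meaningful.  Operators map such vectors to vectors.\<close>

definition qft :: "nat \<Rightarrow> (nat \<Rightarrow> complex) \<Rightarrow> nat \<Rightarrow> complex" where
  "qft M v = (\<lambda>y. if y < M then
      (\<Sum>x<M. cis (2 * pi * real x * real y / real M) / complex_of_real (sqrt (real M)) * v x)
    else 0)"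

definition inv_qft :: "nat \<Rightarrow> (nat \<Rightarrow> complex) \<Rightarrow> nat \<Rightarrow> complex" where
  "inv_qft M v = (\<lambda>y. if y < M then
      (\<Sum>x<M. cis (- 2 * pi * real x * real y / real M) / complex_of_real (sqrt (real M)) * v x)
    else 0)"

definition ket0 :: "nat \<Rightarrow> complex" where
  "ket0 = (\<lambda>x. if x = 0 then 1 else 0)"

definition S_f :: "(nat \<Rightarrow> bool) \<Rightarrow> (nat \<Rightarrow> complex) \<Rightarrow> nat \<Rightarrow> complex" where
  "S_f f v = (\<lambda>x. if f x then - v x else v x)"

definition S_0 :: "(nat \<Rightarrow> complex) \<Rightarrow> nat \<Rightarrow> complex" where
  "S_0 v = (\<lambda>x. if x = 0 then - v x else v x)"

definition Q_op :: "(nat \<Rightarrow> bool) \<Rightarrow> nat \<Rightarrow> (nat \<Rightarrow> complex) \<Rightarrow> nat \<Rightarrow> complex" where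
  "Q_op f N v = (\<lambda>y. - qft N (S_0 (inv_qft N (S_f f v))) y)"

text \<open>Final state of Count(f,M) before measurement, as amplitude of |j>|y>
  (j in the M-dimensional first register, y in the N-dimensional second register).\<close>
definition count_state :: "(nat \<Rightarrow> bool) \<Rightarrow> nat \<Rightarrow> nat \<Rightarrow> nat \<Rightarrow> nat \<Rightarrow> complex" where
  "count_state f N M =
    (let psi0 = (\<lambda>j y. if j = 0 then qft N ket0 y else 0);
         psi1 = (\<lambda>j y. qft M (\<lambda>j'. psi0 j' y) j);
         psi2 = (\<lambda>j y. if j < M then ((Q_op f N) ^^ j) (psi1 j) y else 0);
         psi3 = (\<lambda>j y. inv_qft M (\<lambda>j'. psi2 j' y) j)
     in psi3)"

definition count_prob :: "(nat \<Rightarrow> bool) \<Rightarrow> nat \<Rightarrow> nat \<Rightarrow> nat \<Rightarrow> real" where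
  "count_prob f N M y' = (if y' < M then (\<Sum>y<N. (cmod (count_state f N M y' y))\<^sup>2) else 0)"

definition count_pmf :: "(nat \<Rightarrow> bool) \<Rightarrow> nat \<Rightarrow> nat \<Rightarrow> nat pmf" where
  "count_pmf f N M = embed_pmf (count_prob f N M)"

definition count_est :: "nat \<Rightarrow> nat \<Rightarrow> nat \<Rightarrow> real" where
  "count_est N M y = real N * (sin (pi * real y / real M))\<^sup>2"

lemma ac_loop_termination_aux:
  assumes "(2::real) ^ l < 2 * sqrt (real N)"
  shows "l < N"
proof (rule ccontr)
  assume "\<not> l < N"
  hence lN: "N \<le> l" by simp
  have "real l + 1 \<le> 2 ^ l"
  proof -
    have "l + 1 \<le> (2::nat) ^ l" by (induction l) auto
    hence "real (l + 1) \<le> real ((2::nat) ^ l)" by linarith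
    thus ?thesis by simp
  qed
  hence "real l + 1 < 2 * sqrt (real N)" using assms by linarith
  hence "(real l + 1)^2 < (2 * sqrt (real N))^2"
    by (intro power_strict_mono) auto
  hence "(real l + 1)^2 < 4 * real N" by (simp add: power_mult_distrib)
  moreover have "4 * real N \<le> (real l + 1)^2"
  proof -
    have "real N \<le> real l" using lN by simp
    hence "4 * real N \<le> 4 * real l" by simp
    also have "\<dots> \<le> (real l + 1)^2" 
    proof -
      have "0 \<le> (real l - 1)^2" by simp
      thus ?thesis by (simp add: power2_eq_square algebra_simps)
    qed
    finally show ?thesis .
  qed
  ultimately show False by linarith
qed

text \<open>Steps (2)-(4) of Approx_Count, started with the current value of l (after
  the increment); returns the value of l when the loop is left.\<close>
function ac_loop :: "(nat \<Rightarrow> bool) \<Rightarrow> nat \<Rightarrow> nat \<Rightarrow> nat pmf" where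
  "ac_loop f N l =
     bind_pmf (count_pmf f N (2 ^ l)) (\<lambda>y.
       if count_est N (2 ^ l) y = 0 \<and> (2::real) ^ l < 2 * sqrt (real N)
       then ac_loop f N (Suc l) else return_pmf l)"
  by auto
termination
  by (relation "Wellfounded.measure (\<lambda>(f, N, l). N - l)")
     (auto dest!: ac_loop_termination_aux)

text \<open>Approx_Count(f,eps) on the domain {0..N-1}: returns the triple (l, M, y) where l is
  the final value of l, M the modulus of step (5) and y the outcome of Count(f,M) in
  step (6).  Then t' = count_est N M y, and the final output is any integer within 2/3 of t'.\<close>
definition approx_count :: "(nat \<Rightarrow> bool) \<Rightarrow> nat \<Rightarrow> real \<Rightarrow> (nat \<times> nat \<times> nat) pmf" where
  "approx_count f N \<epsilon> =
     bind_pmf (ac_loop f N 1) (\<lambda>l.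
       let M = nat \<lceil>20 * pi\<^sup>2 / \<epsilon> * 2 ^ l\<rceil> in
       bind_pmf (count_pmf f N M) (\<lambda>y. return_pmf (l, M, y)))"

text \<open>Number of evaluations of f: calls Count(f,2^k), k = 1..l, and Count(f,M).\<close>
definition ac_evals :: "nat \<times> nat \<times> nat \<Rightarrow> nat" where
  "ac_evals r = (case r of (l, M, y) \<Rightarrow> (\<Sum>k\<in>{1..l}. 2 ^ k) + M)"

definition num_sol :: "(nat \<Rightarrow> bool) \<Rightarrow> nat \<Rightarrow> nat" where
  "num_sol f N = card {x. x < N \<and> f x}"

end

theory Submission
  imports Defs
begin


definition G :: "nat \<Rightarrow> real \<Rightarrow> complex" where
  "G M \<phi> = (\<Sum>j<M. cis (real j * \<phi>))"

lemma G_geom: "G M \<phi> * (cis \<phi> - 1) = cis (real M * \<phi>) - 1"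
proof (induction M)
  case 0 then show ?case by (simp add: G_def)
next
  case (Suc M)
  have "G (Suc M) \<phi> = G M \<phi> + cis (real M * \<phi>)" by (simp add: G_def)
  hence "G (Suc M) \<phi> * (cis \<phi> - 1) = G M \<phi> * (cis \<phi> - 1) + cis (real M * \<phi>) * cis \<phi> - cis (real M * \<phi>)"
    by (simp add: algebra_simps)
  also have "\<dots> = cis (real (Suc M) * \<phi>) - 1"
    using Suc by (simp add: cis_mult algebra_simps)
  finally show ?case .
qed

lemma norm_cis_minus_1: "cmod (cis a - 1) = 2 * \<bar>sin (a/2)\<bar>"
proof -
  have c: "cos a = 1 - 2 * sin (a/2)^2" using cos_double_sin[of "a/2"] by simp
  have s: "sin a = 2 * sin (a/2) * cos (a/2)" using sin_double[of "a/2"] by simp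
  have "(cmod (cis a - 1))^2 = (cos a - 1)^2 + (sin a)^2"
    by (simp add: cmod_def cis.code)
  also have "\<dots> = 4 * sin (a/2)^2"
  proof -
    have "(cos a - 1)^2 + (sin a)^2 = 2 - 2 * cos a"
      using sin_cos_squared_add[of a] by (simp add: power2_eq_square algebra_simps)
    thus ?thesis unfolding c by simp
  qed
  also have "\<dots> = (2 * \<bar>sin (a/2)\<bar>)^2" by (simp add: power2_abs power_mult_distrib)
  finally show ?thesis
    by (metis abs_of_nonneg norm_ge_zero power2_eq_iff_nonneg zero_le_mult_iff abs_ge_zero zero_le_numeral)
qed

lemma G_abs: "cmod (G M \<phi>) * \<bar>sin (\<phi>/2)\<bar> = \<bar>sin (real M * \<phi> / 2)\<bar>"
proof -
  have "cmod (G M \<phi>) * cmod (cis \<phi> - 1) = cmod (cis (real M * \<phi>) - 1)"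
    using G_geom[of M \<phi>] by (metis norm_mult)
  thus ?thesis unfolding norm_cis_minus_1 by simp
qed

lemma G_zero[simp]: "G M 0 = of_nat M"
  by (simp add: G_def)

lemma G_neg: "G M (- \<phi>) = cnj (G M \<phi>)"
  by (simp add: G_def cis_cnj)

lemma norm_G_neg[simp]: "cmod (G M (- \<phi>)) = cmod (G M \<phi>)"
  by (simp add: G_neg)

lemma G_shift: "G M (\<phi> - 2 * pi) = G M \<phi>"
proof -
  have "cis (real j * (\<phi> - 2 * pi)) = cis (real j * \<phi>)" for j
  proof -
    have "cis (real j * (\<phi> - 2 * pi)) = cis (real j * \<phi>) * cis (2 * pi * (- real j))"
      by (simp add: cis_mult algebra_simps)
    also have "cis (2 * pi * (- real j)) = 1"
      by (rule cis_multiple_2pi) (simp add: Ints_minus)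
    finally show ?thesis by simp
  qed
  thus ?thesis by (simp add: G_def)
qed

lemma G_orth:
  fixes d :: int
  assumes "0 < M" "d \<noteq> 0" "\<bar>d\<bar> < int M"
  shows "G M (2 * pi * real_of_int d / real M) = 0"
proof -
  let ?\<phi> = "2 * pi * real_of_int d / real M"
  have "cis (real M * ?\<phi>) = cis (2 * pi * real_of_int d)"
    using assms(1) by (simp add: field_simps)
  also have "\<dots> = 1" by (rule cis_multiple_2pi) simp
  finally have "cis (real M * ?\<phi>) = 1" .
  hence eq: "G M ?\<phi> * (cis ?\<phi> - 1) = 0" using G_geom[of M ?\<phi>] by simp
  have "sin (?\<phi>/2) \<noteq> 0"
  proof
    assume "sin (?\<phi>/2) = 0"
    then obtain i :: int where i: "?\<phi>/2 = of_int i * pi" by (auto simp: sin_zero_iff_int2)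
    hence "real_of_int d = real_of_int i * real M" using assms(1) by (simp add: field_simps)
    hence "d = i * int M" by (metis of_int_eq_iff of_int_mult of_int_of_nat_eq)
    hence "\<bar>d\<bar> = \<bar>i\<bar> * int M" by (simp add: abs_mult)
    moreover have "i \<noteq> 0" using \<open>d = i * int M\<close> assms(2) by auto
    moreover have "1 \<le> \<bar>i\<bar>" using \<open>i \<noteq> 0\<close> by (cases "i > 0") auto
    ultimately have "\<bar>d\<bar> \<ge> int M" by (simp add: mult_le_cancel_right1)
    with assms(3) show False by simp
  qed
  hence "cis ?\<phi> - 1 \<noteq> 0" using norm_cis_minus_1[of ?\<phi>] by auto
  with eq show ?thesis by simp
qed


definition psiN :: "nat \<Rightarrow> nat \<Rightarrow> complex" where
  "psiN N = (\<lambda>y. if y < N then 1 / complex_of_real (sqrt (real N)) else 0)"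

lemma qft_ket0: "qft N ket0 = psiN N"
proof
  fix y
  show "qft N ket0 y = psiN N y"
  proof (cases "y < N")
    case True
    hence "0 < N" by simp
    have "(\<Sum>x<N. cis (2 * pi * real x * real y / real N) / complex_of_real (sqrt (real N)) * ket0 x)
        = (\<Sum>x<N. if x = 0 then 1 / complex_of_real (sqrt (real N)) else 0)"
      by (intro sum.cong) (auto simp: ket0_def)
    also have "\<dots> = 1 / complex_of_real (sqrt (real N))" using \<open>0 < N\<close> by simp
    finally show ?thesis using True by (simp add: qft_def psiN_def)
  next
    case False thus ?thesis by (simp add: qft_def psiN_def)
  qed
qed

lemma cis_prod_orth:
  assumes "x < N" "y < N"
  shows "(\<Sum>z<N. cis (2 * pi * real z * real y / real N) * cis (- 2 * pi * real x * real z / real N))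
     = (if x = y then of_nat N else 0)"
proof -
  have "(\<Sum>z<N. cis (2 * pi * real z * real y / real N) * cis (- 2 * pi * real x * real z / real N))
      = G N (2 * pi * real_of_int (int y - int x) / real N)"
    unfolding G_def by (intro sum.cong) (auto simp: cis_mult field_simps)
  also have "\<dots> = (if x = y then of_nat N else 0)"
  proof (cases "x = y")
    case False
    thus ?thesis using assms by (subst G_orth) auto
  qed simp
  finally show ?thesis .
qed

lemma Q_formula:
  assumes N: "0 < N"
  shows "Q_op f N v y = (if y < N then - S_f f v y + complex_of_real (2 / real N) * (\<Sum>x<N. S_f f v x) else 0)"
proof (cases "y < N")
  case False thus ?thesis by (simp add: Q_op_def qft_def)
next
  case True
  define w where "w = S_f f v"
  define c where "c = complex_of_real (sqrt (real N))"
  have cc: "c * c = of_nat N" unfolding c_def of_real_mult[symmetric]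
    by simp
  have c0: "c \<noteq> 0" unfolding c_def using N by simp
  define u where "u = inv_qft N w"
  have u: "u z = (\<Sum>x<N. cis (- 2 * pi * real x * real z / real N) / c * w x)" if "z < N" for z
    using that unfolding u_def inv_qft_def c_def by simp
  have S0: "S_0 u z = u z - (if z = 0 then 2 * u z else 0)" for z
    by (simp add: S_0_def)
  have "qft N (S_0 u) y = (\<Sum>z<N. cis (2 * pi * real z * real y / real N) / c * S_0 u z)"
    using True unfolding qft_def c_def by simp
  also have "\<dots> = (\<Sum>z<N. cis (2 * pi * real z * real y / real N) / c * u z)
                 - (\<Sum>z<N. if z = 0 then 2 * (cis (2 * pi * real z * real y / real N) / c * u z) else 0)"
    unfolding sum_subtractf[symmetric] by (intro sum.cong refl) (simp add: S_0_def)
  also have "(\<Sum>z<N. if z = 0 then 2 * (cis (2 * pi * real z * real y / real N) / c * u z) else 0)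
       = 2 * (u 0 / c)" using N by simp
  also have "u 0 = (\<Sum>x<N. w x) / c" using N by (simp add: u sum_divide_distrib)
  also have "(\<Sum>z<N. cis (2 * pi * real z * real y / real N) / c * u z)
     = (\<Sum>z<N. \<Sum>x<N. w x / (c * c) * (cis (2 * pi * real z * real y / real N) * cis (- 2 * pi * real x * real z / real N)))"
    by (intro sum.cong refl) (simp add: u sum_distrib_left mult_ac)
  also have "\<dots> = (\<Sum>x<N. w x / (c * c) * (\<Sum>z<N. cis (2 * pi * real z * real y / real N) * cis (- 2 * pi * real x * real z / real N)))"
    by (subst sum.swap) (simp add: sum_distrib_left)
  also have "\<dots> = (\<Sum>x<N. if x = y then w x else 0)"
    using True cc N by (intro sum.cong refl) (subst cis_prod_orth, auto)
  also have "\<dots> = w y" using True by simp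
  finally have "qft N (S_0 u) y = w y - 2 * ((\<Sum>x<N. w x) / c / c)" .
  hence "qft N (S_0 u) y = w y - complex_of_real (2 / real N) * (\<Sum>x<N. w x)"
    using cc c0 by (simp add: field_simps)
  thus ?thesis using True unfolding Q_op_def u_def w_def by simp
qed


definition theta :: "(nat \<Rightarrow> bool) \<Rightarrow> nat \<Rightarrow> real" where
  "theta f N = arcsin (sqrt (real (num_sol f N) / real N))"

lemma num_sol_le: "num_sol f N \<le> N"
proof -
  have "{x. x < N \<and> f x} \<subseteq> {..<N}" by auto
  hence "card {x. x < N \<and> f x} \<le> card {..<N}" by (intro card_mono) auto
  thus ?thesis by (simp add: num_sol_def)
qed

lemma num_sol_pos: "y < N \<Longrightarrow> f y \<Longrightarrow> 0 < num_sol f N"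
  unfolding num_sol_def by (subst card_gt_0_iff) auto

lemma num_sol_less: "y < N \<Longrightarrow> \<not> f y \<Longrightarrow> num_sol f N < N"
proof -
  assume "y < N" "\<not> f y"
  hence "{x. x < N \<and> f x} \<subset> {..<N}" by auto
  hence "card {x. x < N \<and> f x} < card {..<N}" by (intro psubset_card_mono) auto
  thus ?thesis by (simp add: num_sol_def)
qed

lemma sum_if_count:
  fixes A B :: "'a::comm_ring_1"
  shows "(\<Sum>x<N. if f x then A else B) = of_nat (num_sol f N) * A + of_nat (N - num_sol f N) * B"
proof -
  have c1: "card ({..<N} \<inter> {x. f x}) = num_sol f N"
    unfolding num_sol_def by (rule arg_cong[where f=card]) auto
  have "{..<N} \<inter> - {x. f x} = {..<N} - {x. x < N \<and> f x}" by auto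
  hence c2: "card ({..<N} \<inter> - {x. f x}) = N - num_sol f N"
    unfolding num_sol_def by (simp only:) (subst card_Diff_subset, auto)
  have "(\<Sum>x<N. if f x then A else B) = (\<Sum>x\<in>{..<N} \<inter> {x. f x}. A) + (\<Sum>x\<in>{..<N} \<inter> - {x. f x}. B)"
    by (simp add: sum.If_cases)
  also have "\<dots> = of_nat (card ({..<N} \<inter> {x. f x})) * A + of_nat (card ({..<N} \<inter> - {x. f x})) * B"
    by simp
  finally show ?thesis by (simp only: c1 c2)
qed

context
  fixes f :: "nat \<Rightarrow> bool" and N :: nat
  assumes N: "0 < N"
begin

definition "tt = real (num_sol f N)"
definition "th = theta f N"

lemma tt_le: "tt \<le> real N" unfolding tt_def using num_sol_le by simp
lemma tt_ge: "0 \<le> tt" unfolding tt_def by simp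

lemma frac_bounds: "0 \<le> tt / real N" "tt / real N \<le> 1"
proof -
  show "0 \<le> tt / real N" using tt_ge by simp
  show "tt / real N \<le> 1" using tt_le N by simp
qed

lemma sq_bounds: "-1 \<le> sqrt (tt / real N)" "sqrt (tt / real N) \<le> 1" "sqrt (tt / real N) \<in> {0..1}"
proof -
  have z: "0 \<le> sqrt (tt / real N)" using frac_bounds(1) by (rule real_sqrt_ge_zero)
  thus "-1 \<le> sqrt (tt / real N)" by linarith
  show o: "sqrt (tt / real N) \<le> 1" using frac_bounds by simp
  show "sqrt (tt / real N) \<in> {0..1}" using z o by simp
qed

lemma sin_th: "sin th = sqrt (tt / real N)"
  unfolding th_def theta_def tt_def[symmetric] using sq_bounds by simp

lemma th_bounds: "0 \<le> th" "th \<le> pi / 2"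
proof -
  note a = sq_bounds
  show "0 \<le> th" "th \<le> pi / 2"
    unfolding th_def theta_def tt_def[symmetric] using arcsin_nonneg[OF a(3)] arcsin_bounded[OF a(1,2)] by auto
qed

lemma cos_th: "cos th = sqrt (1 - tt / real N)"
  unfolding th_def theta_def tt_def[symmetric] using frac_bounds sq_bounds
  by (subst cos_arcsin) auto

lemma sqrt_tt: "sqrt tt = sqrt (real N) * sin th"
  unfolding sin_th using N by (simp add: real_sqrt_mult[symmetric])

lemma sqrt_ntt: "sqrt (real N - tt) = sqrt (real N) * cos th"
proof -
  have "real N * (1 - tt / real N) = real N - tt" using N by (simp add: field_simps)
  thus ?thesis unfolding cos_th by (metis real_sqrt_mult)
qed

definition amp :: "nat \<Rightarrow> nat \<Rightarrow> real" where
  "amp j y = (if f y then sin ((2 * real j + 1) * th) / sqrt tt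
              else cos ((2 * real j + 1) * th) / sqrt (real N - tt))"

lemma amp_0: "y < N \<Longrightarrow> amp 0 y = 1 / sqrt (real N)"
proof -
  assume y: "y < N"
  show ?thesis
  proof (cases "f y")
    case True
    hence "0 < tt" using num_sol_pos[OF y] tt_def by simp
    hence "sin th > 0" using sqrt_tt N by (metis mult_pos_pos real_sqrt_gt_zero zero_less_mult_pos of_nat_0_less_iff)
    thus ?thesis using True unfolding amp_def sqrt_tt by simp
  next
    case False
    hence "tt < real N" using num_sol_less[OF y] tt_def by simp
    hence "cos th > 0" using sqrt_ntt N
      by (metis diff_gt_0_iff_gt real_sqrt_gt_zero zero_less_mult_pos of_nat_0_less_iff)
    thus ?thesis using False unfolding amp_def sqrt_ntt by simp
  qed
qed

lemma sqrt_div_aux: "0 \<le> (a::real) \<Longrightarrow> a * (b / sqrt a) = sqrt a * b"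
proof (cases "a = 0")
  case False
  assume a: "0 \<le> a"
  have e: "sqrt a * sqrt a = a" using a by simp
  have "sqrt a \<noteq> 0" using False a by simp
  hence e2: "sqrt a * (b / sqrt a) = b" by simp
  have "a * (b / sqrt a) = sqrt a * (sqrt a * (b / sqrt a))" using e by (metis mult.assoc)
  also have "\<dots> = sqrt a * b" by (simp only: e2)
  finally show ?thesis .
qed simp

lemma tt_sin: "tt * (sin \<phi> / sqrt tt) = sqrt tt * sin \<phi>"
  using tt_ge by (rule sqrt_div_aux)

lemma ntt_cos: "(real N - tt) * (cos \<phi> / sqrt (real N - tt)) = sqrt (real N - tt) * cos \<phi>"
  using tt_le by (intro sqrt_div_aux) simp

lemma step_good:
  assumes "0 < tt"
  shows "sin \<phi> / sqrt tt + 2 / real N * (- (sqrt tt * sin \<phi>) + sqrt (real N - tt) * cos \<phi>)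
       = sin (\<phi> + 2 * th) / sqrt tt"
proof -
  define r where "r = sqrt (real N)"
  have r: "0 < r" "r * r = real N" unfolding r_def using N by auto
  have s: "0 < sin th" using assms sqrt_tt r_def r by (metis real_sqrt_gt_zero zero_less_mult_pos)
  have e: "sin (\<phi> + 2 * th) = sin \<phi> * (1 - 2 * sin th ^ 2) + cos \<phi> * (2 * sin th * cos th)"
    by (simp add: sin_add sin_double cos_double_sin)
  have e1: "sqrt tt = r * sin th" "sqrt (real N - tt) = r * cos th" using sqrt_tt sqrt_ntt r_def by auto
  have "sin \<phi> / (r * sin th) + 2 / (r * r) * (- (r * sin th * sin \<phi>) + r * cos th * cos \<phi>)
     = (sin \<phi> * (1 - 2 * sin th ^ 2) + cos \<phi> * (2 * sin th * cos th)) / (r * sin th)"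
    using r(1) s by (simp add: field_simps power2_eq_square)
  thus ?thesis unfolding e1 unfolding r(2)[symmetric] e .
qed

lemma step_bad:
  assumes "tt < real N"
  shows "- (cos \<phi> / sqrt (real N - tt)) + 2 / real N * (- (sqrt tt * sin \<phi>) + sqrt (real N - tt) * cos \<phi>)
       = cos (\<phi> + 2 * th) / sqrt (real N - tt)"
proof -
  define r where "r = sqrt (real N)"
  have r: "0 < r" "r * r = real N" unfolding r_def using N by auto
  have c: "0 < cos th" using assms sqrt_ntt r_def r
    by (metis diff_gt_0_iff_gt real_sqrt_gt_zero zero_less_mult_pos)
  have e: "cos (\<phi> + 2 * th) = cos \<phi> * (2 * cos th ^ 2 - 1) - sin \<phi> * (2 * sin th * cos th)"
    by (simp add: cos_add sin_double cos_double_cos)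
  have e1: "sqrt tt = r * sin th" "sqrt (real N - tt) = r * cos th" using sqrt_tt sqrt_ntt r_def by auto
  have "- (cos \<phi> / (r * cos th)) + 2 / (r * r) * (- (r * sin th * sin \<phi>) + r * cos th * cos \<phi>)
     = (cos \<phi> * (2 * cos th ^ 2 - 1) - sin \<phi> * (2 * sin th * cos th)) / (r * cos th)"
    using r(1) c by (simp add: field_simps power2_eq_square)
  thus ?thesis unfolding e1 unfolding r(2)[symmetric] e .
qed

lemma Qpow:
  "((Q_op f N) ^^ j) (\<lambda>y. \<kappa> * psiN N y) y = (if y < N then \<kappa> * complex_of_real (amp j y) else 0)"
proof (induction j arbitrary: y)
  case 0
  show ?case using amp_0 by (simp add: psiN_def)
next
  case (Suc j)
  define V where "V = ((Q_op f N) ^^ j) (\<lambda>y. \<kappa> * psiN N y)"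
  have V: "V y = (if y < N then \<kappa> * complex_of_real (amp j y) else 0)" for y
    using Suc unfolding V_def by simp
  define \<phi> where "\<phi> = (2 * real j + 1) * th"
  have phi2: "(2 * real (Suc j) + 1) * th = \<phi> + 2 * th" unfolding \<phi>_def by (simp add: algebra_simps)
  have SV: "S_f f V x = (if x < N then \<kappa> * complex_of_real (if f x then - (sin \<phi> / sqrt tt) else cos \<phi> / sqrt (real N - tt)) else 0)" for x
    by (simp add: S_f_def V amp_def \<phi>_def)
  have "(\<Sum>x<N. S_f f V x) = (\<Sum>x<N. \<kappa> * complex_of_real (if f x then - (sin \<phi> / sqrt tt) else cos \<phi> / sqrt (real N - tt)))"
    by (intro sum.cong) (auto simp: SV)
  also have "\<dots> = \<kappa> * complex_of_real (\<Sum>x<N. if f x then - (sin \<phi> / sqrt tt) else cos \<phi> / sqrt (real N - tt))"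
    by (simp add: sum_distrib_left)
  also have "(\<Sum>x<N. if f x then - (sin \<phi> / sqrt tt) else cos \<phi> / sqrt (real N - tt))
     = - (sqrt tt * sin \<phi>) + sqrt (real N - tt) * cos \<phi>"
    unfolding sum_if_count using tt_sin[of \<phi>] ntt_cos[of \<phi>] num_sol_le[of f N]
    by (simp add: tt_def of_nat_diff)
  finally have sumV: "(\<Sum>x<N. S_f f V x) = \<kappa> * complex_of_real (- (sqrt tt * sin \<phi>) + sqrt (real N - tt) * cos \<phi>)" .
  show ?case
  proof (cases "y < N")
    case False thus ?thesis using Q_formula[OF N] by (simp add: V_def)
  next
    case True
    have "((Q_op f N) ^^ Suc j) (\<lambda>y. \<kappa> * psiN N y) y = Q_op f N V y" by (simp add: V_def)
    also have "\<dots> = - S_f f V y + complex_of_real (2 / real N) * (\<Sum>x<N. S_f f V x)"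
      using Q_formula[OF N] True by simp
    also have "\<dots> = \<kappa> * complex_of_real (amp (Suc j) y)"
    proof (cases "f y")
      case True
      hence "0 < tt" using num_sol_pos[OF \<open>y < N\<close>] tt_def by simp
      have am: "amp (Suc j) y = sin \<phi> / sqrt tt + 2 / real N * (- (sqrt tt * sin \<phi>) + sqrt (real N - tt) * cos \<phi>)"
        using step_good[OF \<open>0 < tt\<close>, of \<phi>] True unfolding amp_def phi2 by simp
      have A: "S_f f V y = \<kappa> * complex_of_real (- (sin \<phi> / sqrt tt))" using SV[of y] True \<open>y < N\<close> by simp
      show ?thesis unfolding sumV A am by (simp add: algebra_simps)
    next
      case False
      hence "tt < real N" using num_sol_less[OF \<open>y < N\<close>] tt_def by simp
      have am: "amp (Suc j) y = - (cos \<phi> / sqrt (real N - tt)) + 2 / real N * (- (sqrt tt * sin \<phi>) + sqrt (real N - tt) * cos \<phi>)"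
        using step_bad[OF \<open>tt < real N\<close>, of \<phi>] False unfolding amp_def phi2 by simp
      have A: "S_f f V y = \<kappa> * complex_of_real (cos \<phi> / sqrt (real N - tt))" using SV[of y] False \<open>y < N\<close> by simp
      show ?thesis unfolding sumV A am by (simp add: algebra_simps)
    qed
    finally show ?thesis using True by simp
  qed
qed

end


lemma parallelogram_cmod:
  "(cmod (a - b))^2 + (cmod (a + b))^2 = 2 * (cmod a)^2 + 2 * (cmod b)^2"
proof -
  have "complex_of_real ((cmod (a - b))^2 + (cmod (a + b))^2) = (a - b) * cnj (a - b) + (a + b) * cnj (a + b)"
    by (simp only: of_real_add complex_norm_square)
  also have "\<dots> = 2 * (a * cnj a) + 2 * (b * cnj b)" by (simp add: algebra_simps)
  also have "\<dots> = complex_of_real (2 * (cmod a)^2 + 2 * (cmod b)^2)"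
    by (simp only: of_real_add of_real_mult complex_norm_square) simp
  finally show ?thesis by (simp only: of_real_eq_iff)
qed

lemma of_real_sin_cis: "complex_of_real (sin a) = (cis a - cis (- a)) / (2 * \<i>)"
  by (simp add: complex_eq_iff cis.code)

lemma of_real_cos_cis: "complex_of_real (cos a) = (cis a + cis (- a)) / 2"
  by (simp add: complex_eq_iff cis.code)

context
  fixes f :: "nat \<Rightarrow> bool" and N M :: nat
  assumes N: "0 < N" and M: "0 < M"
begin

lemma psi1_eq: "x < M \<Longrightarrow>
  (\<lambda>y. qft M (\<lambda>j'. (\<lambda>j y. if j = 0 then qft N ket0 y else 0) j' y) x)
   = (\<lambda>y. (1 / complex_of_real (sqrt (real M))) * psiN N y)"
proof
  fix y assume x: "x < M"
  have "qft M (\<lambda>j'. if j' = 0 then qft N ket0 y else 0) x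
     = (\<Sum>j<M. cis (2 * pi * real j * real x / real M) / complex_of_real (sqrt (real M)) * (if j = 0 then psiN N y else 0))"
    using x unfolding qft_ket0 unfolding qft_def by simp
  also have "\<dots> = (\<Sum>j<M. if j = 0 then 1 / complex_of_real (sqrt (real M)) * psiN N y else 0)"
    by (intro sum.cong refl) simp
  also have "\<dots> = 1 / complex_of_real (sqrt (real M)) * psiN N y" using M by simp
  finally show "qft M (\<lambda>j'. (\<lambda>j y. if j = 0 then qft N ket0 y else 0) j' y) x = 1 / complex_of_real (sqrt (real M)) * psiN N y"
    by simp
qed

lemma count_state_eq:
  assumes y': "y' < M" and y: "y < N"
  shows "count_state f N M y' y
     = (\<Sum>x<M. cis (- 2 * pi * real x * real y' / real M) * complex_of_real (amp f N x y)) / of_nat M"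
proof -
  define c where "c = complex_of_real (sqrt (real M))"
  have cc: "c * c = of_nat M" unfolding c_def of_real_mult[symmetric] by simp
  have c0: "c \<noteq> 0" unfolding c_def using M by simp
  have "count_state f N M y' y
      = (\<Sum>x<M. cis (- 2 * pi * real x * real y' / real M) / c *
            (if x < M then ((Q_op f N) ^^ x)
               (\<lambda>y. qft M (\<lambda>j'. (\<lambda>j y. if j = 0 then qft N ket0 y else 0) j' y) x) y else 0))"
    unfolding count_state_def Let_def inv_qft_def c_def using y' by simp
  also have "\<dots> = (\<Sum>x<M. cis (- 2 * pi * real x * real y' / real M) / c * ((1 / c) * complex_of_real (amp f N x y)))"
  proof (intro sum.cong refl)
    fix x assume "x \<in> {..<M}"
    hence x: "x < M" by simp
    show "cis (- 2 * pi * real x * real y' / real M) / c *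
            (if x < M then ((Q_op f N) ^^ x)
               (\<lambda>y. qft M (\<lambda>j'. (\<lambda>j y. if j = 0 then qft N ket0 y else 0) j' y) x) y else 0)
        = cis (- 2 * pi * real x * real y' / real M) / c * ((1 / c) * complex_of_real (amp f N x y))"
      using x y unfolding psi1_eq[OF x] Qpow[OF N] c_def by simp
  qed
  also have "\<dots> = (\<Sum>x<M. cis (- 2 * pi * real x * real y' / real M) * complex_of_real (amp f N x y)) / (c * c)"
    using c0 by (simp add: sum_divide_distrib field_simps)
  finally show ?thesis unfolding cc .
qed

definition "XX y' = (\<Sum>x<M. cis (- 2 * pi * real x * real y' / real M) * complex_of_real (sin ((2 * real x + 1) * th f N)))"
definition "ZZ y' = (\<Sum>x<M. cis (- 2 * pi * real x * real y' / real M) * complex_of_real (cos ((2 * real x + 1) * th f N)))"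

lemma XX_zero: "tt f N = 0 \<Longrightarrow> XX y' = 0"
  unfolding XX_def th_def[OF N] theta_def tt_def[OF N, symmetric] by simp

lemma ZZ_zero: "tt f N = real N \<Longrightarrow> ZZ y' = 0"
proof -
  assume "tt f N = real N"
  hence th: "th f N = pi / 2" unfolding th_def[OF N] theta_def tt_def[OF N, symmetric] using N by simp
  have "cos ((2 * real x + 1) * (pi / 2)) = 0" for x :: nat
    by (subst cos_zero_iff_int) (rule exI[of _ "2 * int x + 1"], simp)
  hence "cos ((2 * real x + 1) * th f N) = 0" for x :: nat unfolding th .
  thus ?thesis unfolding ZZ_def by simp
qed

lemma cis_mult_eq: "a + b = c + d \<Longrightarrow> cis a * cis b = cis c * cis d"
  by (simp add: cis_mult)

lemma count_prob_XZ:
  assumes y': "y' < M"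
  shows "count_prob f N M y' = ((cmod (XX y'))^2 + (cmod (ZZ y'))^2) / (real M)^2"
proof -
  have sq: "sqrt (tt f N) ^ 2 = tt f N" "sqrt (real N - tt f N) ^ 2 = real N - tt f N"
    using tt_ge[OF N] tt_le[OF N] by simp_all
  have good: "(cmod (count_state f N M y' y))^2 = (cmod (XX y'))^2 / (real M ^ 2 * tt f N)"
    if "y < N" "f y" for y
  proof -
    have "count_state f N M y' y = XX y' / (complex_of_real (sqrt (tt f N)) * of_nat M)"
      unfolding count_state_eq[OF y' that(1)] XX_def amp_def[OF N] using that(2)
      by (simp add: sum_divide_distrib divide_simps)
    thus ?thesis by (simp add: norm_divide norm_mult power_divide power_mult_distrib sq)
  qed
  have bad: "(cmod (count_state f N M y' y))^2 = (cmod (ZZ y'))^2 / (real M ^ 2 * (real N - tt f N))"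
    if "y < N" "\<not> f y" for y
  proof -
    have "count_state f N M y' y = ZZ y' / (complex_of_real (sqrt (real N - tt f N)) * of_nat M)"
      unfolding count_state_eq[OF y' that(1)] ZZ_def amp_def[OF N] using that(2)
      by (simp add: sum_divide_distrib divide_simps)
    thus ?thesis by (simp add: norm_divide norm_mult power_divide power_mult_distrib sq)
  qed
  have "count_prob f N M y' = (\<Sum>y<N. if f y then (cmod (XX y'))^2 / (real M ^ 2 * tt f N)
                                      else (cmod (ZZ y'))^2 / (real M ^ 2 * (real N - tt f N)))"
    unfolding count_prob_def using y' by (auto intro!: sum.cong simp: good bad)
  also have "\<dots> = tt f N * ((cmod (XX y'))^2 / (real M ^ 2 * tt f N))
       + (real N - tt f N) * ((cmod (ZZ y'))^2 / (real M ^ 2 * (real N - tt f N)))"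
    unfolding sum_if_count tt_def[OF N] using num_sol_le[of f N] by (simp add: of_nat_diff)
  also have "tt f N * ((cmod (XX y'))^2 / (real M ^ 2 * tt f N)) = (cmod (XX y'))^2 / (real M)^2"
    by (cases "tt f N = 0") (simp_all add: XX_zero)
  also have "(real N - tt f N) * ((cmod (ZZ y'))^2 / (real M ^ 2 * (real N - tt f N))) = (cmod (ZZ y'))^2 / (real M)^2"
    by (cases "tt f N = real N") (simp_all add: ZZ_zero)
  finally show ?thesis by (simp add: add_divide_distrib)
qed

lemma count_prob_eq:
  assumes y': "y' < M"
  shows "count_prob f N M y' = ((cmod (G M (2 * th f N - 2 * pi * real y' / real M)))^2
                               + (cmod (G M (- 2 * th f N - 2 * pi * real y' / real M)))^2) / (2 * (real M)^2)"
proof -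
  define Ep where "Ep = (\<Sum>x<M. cis (- 2 * pi * real x * real y' / real M) * cis ((2 * real x + 1) * th f N))"
  define Em where "Em = (\<Sum>x<M. cis (- 2 * pi * real x * real y' / real M) * cis (- ((2 * real x + 1) * th f N)))"
  have X: "XX y' = (Ep - Em) / (2 * \<i>)"
    unfolding XX_def Ep_def Em_def of_real_sin_cis
    by (simp add: sum_subtractf[symmetric] sum_divide_distrib algebra_simps diff_divide_distrib)
  have Z: "ZZ y' = (Ep + Em) / 2"
    unfolding ZZ_def Ep_def Em_def of_real_cos_cis
    by (simp add: sum.distrib[symmetric] sum_divide_distrib algebra_simps add_divide_distrib)
  have Ep: "Ep = cis (th f N) * G M (2 * th f N - 2 * pi * real y' / real M)"
    unfolding Ep_def G_def sum_distrib_left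
    by (intro sum.cong refl cis_mult_eq) (simp add: field_simps)
  have Em: "Em = cis (- th f N) * G M (- 2 * th f N - 2 * pi * real y' / real M)"
    unfolding Em_def G_def sum_distrib_left
    by (intro sum.cong refl cis_mult_eq) (simp add: field_simps)
  have "(cmod (XX y'))^2 + (cmod (ZZ y'))^2 = ((cmod (Ep - Em))^2 + (cmod (Ep + Em))^2) / 4"
    unfolding X Z by (simp add: norm_divide power_divide norm_mult)
  also have "\<dots> = ((cmod Ep)^2 + (cmod Em)^2) / 2" unfolding parallelogram_cmod by simp
  finally have h: "(cmod (XX y'))^2 + (cmod (ZZ y'))^2 = ((cmod (G M (2 * th f N - 2 * pi * real y' / real M)))^2
                               + (cmod (G M (- 2 * th f N - 2 * pi * real y' / real M)))^2) / 2"
    unfolding Ep Em by (simp add: norm_mult)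
  show ?thesis unfolding count_prob_XZ[OF y'] h by (simp add: field_simps)
qed

end


lemma cis_term_eq:
  assumes M: "0 < M"
  shows "cis (real j * (\<alpha> - 2 * pi * real z / real M)) * cnj (cis (real k * (\<alpha> - 2 * pi * real z / real M)))
    = cis (real j * \<alpha>) * cis (- (real k * \<alpha>)) *
      (cis (2 * pi * real z * real k / real M) * cis (- 2 * pi * real j * real z / real M))"
proof -
  have "cis (real j * (\<alpha> - 2 * pi * real z / real M)) * cnj (cis (real k * (\<alpha> - 2 * pi * real z / real M)))
      = cis (real j * (\<alpha> - 2 * pi * real z / real M) + - (real k * (\<alpha> - 2 * pi * real z / real M)))"
    by (simp add: cis_cnj cis_mult)
  also have "\<dots> = cis (real j * \<alpha> + - (real k * \<alpha>) + (2 * pi * real z * real k / real M + - 2 * pi * real j * real z / real M))"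
    using M by (intro arg_cong[where f=cis]) (simp add: field_simps)
  also have "\<dots> = cis (real j * \<alpha>) * cis (- (real k * \<alpha>)) *
      (cis (2 * pi * real z * real k / real M) * cis (- 2 * pi * real j * real z / real M))"
    by (simp add: cis_mult)
  finally show ?thesis .
qed

lemma parseval_G:
  assumes M: "0 < M"
  shows "(\<Sum>z<M. (cmod (G M (\<alpha> - 2 * pi * real z / real M)))^2) = (real M)^2"
proof -
  have "complex_of_real (\<Sum>z<M. (cmod (G M (\<alpha> - 2 * pi * real z / real M)))^2)
      = (\<Sum>z<M. \<Sum>j<M. \<Sum>k<M. cis (real j * \<alpha>) * cis (- (real k * \<alpha>)) *
      (cis (2 * pi * real z * real k / real M) * cis (- 2 * pi * real j * real z / real M)))"
    unfolding of_real_sum complex_norm_square G_def cnj_sum sum_product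
    by (intro sum.cong refl) (rule cis_term_eq[OF M])
  also have "\<dots> = (\<Sum>j<M. \<Sum>z<M. \<Sum>k<M. cis (real j * \<alpha>) * cis (- (real k * \<alpha>)) *
      (cis (2 * pi * real z * real k / real M) * cis (- 2 * pi * real j * real z / real M)))"
    by (rule sum.swap)
  also have "\<dots> = (\<Sum>j<M. \<Sum>k<M. \<Sum>z<M. cis (real j * \<alpha>) * cis (- (real k * \<alpha>)) *
      (cis (2 * pi * real z * real k / real M) * cis (- 2 * pi * real j * real z / real M)))"
    by (rule sum.cong[OF refl], rule sum.swap)
  also have "\<dots> = (\<Sum>j<M. \<Sum>k<M. cis (real j * \<alpha>) * cis (- (real k * \<alpha>)) *
      (\<Sum>z<M. cis (2 * pi * real z * real k / real M) * cis (- 2 * pi * real j * real z / real M)))"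
    by (simp only: sum_distrib_left)
  also have "\<dots> = (\<Sum>j<M. \<Sum>k<M. if j = k then of_nat M else 0)"
    by (intro sum.cong refl) (subst cis_prod_orth, auto simp: cis_mult)
  also have "\<dots> = complex_of_real ((real M)^2)" by (simp add: power2_eq_square)
  finally show ?thesis by (simp only: of_real_eq_iff)
qed

context
  fixes f :: "nat \<Rightarrow> bool" and N M :: nat
  assumes N: "0 < N" and M: "0 < M"
begin

lemma count_prob_nonneg: "0 \<le> count_prob f N M y"
  unfolding count_prob_def by (auto intro!: sum_nonneg)

lemma count_prob_sum: "(\<Sum>y<M. count_prob f N M y) = 1"
proof -
  have "(\<Sum>y<M. count_prob f N M y) = (\<Sum>y<M. ((cmod (G M (2 * th f N - 2 * pi * real y / real M)))^2
                               + (cmod (G M (- 2 * th f N - 2 * pi * real y / real M)))^2) / (2 * (real M)^2))"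
    by (intro sum.cong refl) (simp add: count_prob_eq[OF N M])
  also have "\<dots> = ((real M)^2 + (real M)^2) / (2 * (real M)^2)"
    unfolding sum_divide_distrib[symmetric] sum.distrib parseval_G[OF M] ..
  also have "\<dots> = 1" using M by simp
  finally show ?thesis .
qed

lemma pmf_count: "pmf (count_pmf f N M) y = count_prob f N M y"
proof -
  have "(\<integral>\<^sup>+x. ennreal (count_prob f N M x) \<partial>count_space UNIV) = (\<Sum>x<M. ennreal (count_prob f N M x))"
    by (rule nn_integral_count_space') (auto simp: count_prob_def)
  also have "\<dots> = 1" using count_prob_sum count_prob_nonneg by (simp add: sum_ennreal)
  finally show ?thesis unfolding count_pmf_def
    by (intro pmf_embed_pmf) (auto simp: count_prob_nonneg)
qed

lemma set_pmf_count: "set_pmf (count_pmf f N M) \<subseteq> {..<M}"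
  by (auto simp: set_pmf_eq pmf_count count_prob_def)

lemma count_pmf_sum: "(\<Sum>y<M. pmf (count_pmf f N M) y) = 1"
  by (simp add: pmf_count count_prob_sum)

lemma count_pmf_0: "pmf (count_pmf f N M) 0 = (cmod (G M (2 * th f N)))^2 / (real M)^2"
proof -
  have "G M (- 2 * th f N) = G M (- (2 * th f N))" by simp
  thus ?thesis unfolding pmf_count count_prob_eq[OF N M M] by (simp add: power2_eq_square)
qed

lemma count_est_zero_iff: "y < M \<Longrightarrow> count_est N M y = 0 \<longleftrightarrow> y = 0"
proof -
  assume y: "y < M"
  have "sin (pi * real y / real M) = 0 \<longleftrightarrow> y = 0"
  proof
    assume "sin (pi * real y / real M) = 0"
    then obtain i :: int where i: "pi * real y / real M = of_int i * pi" by (auto simp: sin_zero_iff_int2)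
    hence "real y = of_int i * real M" using M by (simp add: field_simps)
    hence "int y = i * int M" by (metis of_int_eq_iff of_int_mult of_int_of_nat_eq)
    show "y = 0"
    proof (rule ccontr)
      assume "y \<noteq> 0"
      hence "i \<noteq> 0" using \<open>int y = i * int M\<close> by auto
      hence "1 \<le> \<bar>i\<bar>" by (cases "i > 0") auto
      hence "int M \<le> \<bar>i\<bar> * int M" by (simp add: mult_le_cancel_right1)
      also have "\<dots> = \<bar>int y\<bar>" using \<open>int y = i * int M\<close> by (simp add: abs_mult)
      finally show False using y by simp
    qed
  qed simp
  thus ?thesis using N unfolding count_est_def by simp
qed

end


lemma sin_ge_cubic:
  fixes x :: real
  assumes "0 \<le> x"
  shows "x - x^3 / 6 \<le> sin x"
proof -
  obtain t where t: "sin x = (\<Sum>m<3. sin_coeff m * x ^ m) + (sin (t + 1/2 * real 3 * pi) / fact 3) * x ^ 3"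
    using Maclaurin_sin_expansion[of x 3] by blast
  have s: "(\<Sum>m<3. sin_coeff m * x ^ m) = x"
    by (simp add: sin_coeff_def numeral_3_eq_3)
  have "- 1 \<le> sin (t + 1/2 * real 3 * pi)" by simp
  hence "- (x^3) \<le> sin (t + 1/2 * real 3 * pi) * x^3"
    using assms by (metis mult_minus_left mult_right_mono mult_1 zero_le_power)
  thus ?thesis unfolding t s by (simp add: fact_numeral)
qed

lemma cos_ge_quad:
  fixes x :: real
  shows "1 - x^2 / 2 \<le> cos x"
proof -
  have c: "cos x = 1 - 2 * sin (x/2)^2" using cos_double_sin[of "x/2"] by simp
  have "\<bar>sin (x/2)\<bar> \<le> \<bar>x/2\<bar>" by (rule abs_sin_x_le_abs_x)
  hence "sin (x/2)^2 \<le> (x/2)^2" by (metis abs_le_square_iff)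
  thus ?thesis unfolding c by (simp add: power_divide)
qed

lemma pi_sq_le: "pi^2 \<le> 3.1416^2"
  using pi_approx(2) by (intro power_mono) auto

lemma sin_ge_half:
  assumes "0 \<le> x" "x \<le> pi / 2"
  shows "x / 2 \<le> sin x"
proof -
  have "x^2 \<le> (pi/2)^2" using assms by (intro power_mono) auto
  also have "\<dots> \<le> 3" using pi_sq_le by (simp add: power_divide)
  finally have "x^2 \<le> 3" .
  hence "x / 2 \<le> x - x^3 / 6" using assms(1)
    by (simp add: power2_eq_square power3_eq_cube field_simps mult_left_mono)
  also have "\<dots> \<le> sin x" using sin_ge_cubic assms by simp
  finally show ?thesis .
qed

lemma fejer_piece:
  fixes a b sl d :: real
  assumes "0 < a" "a \<le> d" "d \<le> b" "b \<le> 1/2" "0 \<le> sl" "sl \<le> 1 - 3.1416^2 * (1/2 - a)^2 / 2"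
    "7/10 * 3.1416^2 \<le> sl^2 * (1 / b^2 + 1 / (1 - a)^2)"
  shows "7/10 * pi^2 \<le> sin (pi * d)^2 * (1 / d^2 + 1 / (1 - d)^2)"
proof -
  have "(pi * (1/2 - d))^2 \<le> (3.1416 * (1/2 - a))^2"
    using assms pi_approx(2) by (intro power_mono mult_mono) auto
  also have "\<dots> = 3.1416^2 * (1/2 - a)^2" by (rule power_mult_distrib)
  finally have "sl \<le> 1 - (pi * (1/2 - d))^2 / 2" using assms(6) by linarith
  also have "\<dots> \<le> cos (pi * (1/2 - d))" by (rule cos_ge_quad)
  also have "cos (pi * (1/2 - d)) = sin (pi * d)" by (simp add: sin_cos_eq algebra_simps)
  finally have s: "sl \<le> sin (pi * d)" .
  hence s2: "sl^2 \<le> sin (pi * d)^2" using assms(5) by (intro power_mono) auto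
  have w1: "1 / b^2 \<le> 1 / d^2" using assms by (intro divide_left_mono power_mono mult_pos_pos) auto
  have w2: "1 / (1 - a)^2 \<le> 1 / (1 - d)^2" using assms by (intro divide_left_mono power_mono mult_pos_pos) auto
  have "7/10 * pi^2 \<le> 7/10 * 3.1416^2" using pi_sq_le by simp
  also have "\<dots> \<le> sl^2 * (1 / b^2 + 1 / (1 - a)^2)" by (rule assms(7))
  also have "\<dots> \<le> sin (pi * d)^2 * (1 / d^2 + 1 / (1 - d)^2)"
    using s2 w1 w2 by (intro mult_mono add_mono) auto
  finally show ?thesis .
qed

lemma fejer_half:
  fixes d :: real
  assumes "0 < d" "d \<le> 1/2"
  shows "7/10 * pi^2 \<le> sin (pi * d)^2 * (1 / d^2 + 1 / (1 - d)^2)"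
proof -
  consider "d \<le> 0.3" | "0.3 \<le> d" "d \<le> 0.33" | "0.33 \<le> d" "d \<le> 0.36" | "0.36 \<le> d" "d \<le> 0.4"
    | "0.4 \<le> d" "d \<le> 0.45" | "0.45 \<le> d" by linarith
  thus ?thesis
  proof cases
    case 1
    have "(pi * d)^2 \<le> (3.1416 * (3/10))^2"
      using 1 assms pi_approx(2) by (intro power_mono mult_mono) auto
    moreover have "(3.1416 * (3/10))^2 \<le> ((9/10)::real)" by (simp add: power2_eq_square)
    ultimately have "(pi * d)^2 \<le> (9/10)" by (rule order_trans)
    hence h: "(17/20) \<le> 1 - (pi * d)^2 / 6" by simp
    have "pi * d * (17/20) \<le> pi * d * (1 - (pi * d)^2 / 6)"
      using h assms by (intro mult_left_mono) auto
    also have "\<dots> = pi * d - (pi * d)^3 / 6" by (simp add: power2_eq_square power3_eq_cube algebra_simps)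
    also have "\<dots> \<le> sin (pi * d)" using assms by (intro sin_ge_cubic) simp
    finally have "(pi * d * (17/20))^2 \<le> sin (pi * d)^2" using assms by (intro power_mono) auto
    hence "(pi * d * (17/20))^2 / d^2 \<le> sin (pi * d)^2 / d^2" by (simp add: divide_right_mono)
    moreover have "(pi * d * (17/20))^2 / d^2 = (289/400) * pi^2" using assms by (simp add: field_simps power2_eq_square)
    moreover have "0 \<le> sin (pi * d)^2 * (1 / (1 - d)^2)" by simp
    moreover have "sin (pi * d)^2 * (1 / d^2 + 1 / (1 - d)^2) = sin (pi * d)^2 / d^2 + sin (pi * d)^2 * (1 / (1 - d)^2)"
      by (simp add: distrib_left)
    moreover have "0 \<le> pi^2" by simp
    ultimately show ?thesis by linarith
  next
    case 2 thus ?thesis by (intro fejer_piece[where a="0.3" and b="0.33" and sl="0.8"]) (use assms in \<open>auto simp: power2_eq_square\<close>)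
  next
    case 3 thus ?thesis by (intro fejer_piece[where a="0.33" and b="0.36" and sl="0.85"]) (use assms in \<open>auto simp: power2_eq_square\<close>)
  next
    case 4 thus ?thesis by (intro fejer_piece[where a="0.36" and b="0.4" and sl="0.9"]) (use assms in \<open>auto simp: power2_eq_square\<close>)
  next
    case 5 thus ?thesis by (intro fejer_piece[where a="0.4" and b="0.45" and sl="0.95"]) (use assms in \<open>auto simp: power2_eq_square\<close>)
  next
    case 6 thus ?thesis by (intro fejer_piece[where a="0.45" and b="0.5" and sl="0.98"]) (use assms in \<open>auto simp: power2_eq_square\<close>)
  qed
qed

lemma fejer_pair:
  fixes d :: real
  assumes "0 < d" "d < 1"
  shows "7/10 \<le> sin (pi * d)^2 / (pi^2 * d^2) + sin (pi * d)^2 / (pi^2 * (1 - d)^2)"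
proof -
  have "7/10 * pi^2 \<le> sin (pi * d)^2 * (1 / d^2 + 1 / (1 - d)^2)"
  proof (cases "d \<le> 1/2")
    case True thus ?thesis using fejer_half assms by simp
  next
    case False
    have "7/10 * pi^2 \<le> sin (pi * (1 - d))^2 * (1 / (1 - d)^2 + 1 / (1 - (1 - d))^2)"
      using False assms by (intro fejer_half) auto
    also have "sin (pi * (1 - d)) = sin (pi * d)" by (simp add: right_diff_distrib sin_diff)
    finally show ?thesis by (simp add: algebra_simps)
  qed
  moreover have "sin (pi * d)^2 / (pi^2 * d^2) + sin (pi * d)^2 / (pi^2 * (1 - d)^2)
      = (sin (pi * d)^2 * (1 / d^2 + 1 / (1 - d)^2)) / pi^2"
    using assms by (simp add: field_simps)
  ultimately show ?thesis by (simp add: pos_le_divide_eq)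
qed


lemma G_lower:
  assumes M: "0 < M" and e: "0 < e"
  shows "sin (pi * e)^2 / (pi^2 * e^2) \<le> (cmod (G M (2 * pi * e / real M)))^2 / (real M)^2"
proof -
  have h: "cmod (G M (2 * pi * e / real M)) * \<bar>sin (pi * e / real M)\<bar> = \<bar>sin (pi * e)\<bar>"
    using G_abs[of M "2 * pi * e / real M"] M by (simp add: field_simps)
  show ?thesis
  proof (cases "sin (pi * e / real M) = 0")
    case True
    hence "sin (pi * e) = 0" using h by simp
    thus ?thesis by simp
  next
    case False
    have pos: "0 < \<bar>sin (pi * e / real M)\<bar>" using False by simp
    have le: "\<bar>sin (pi * e / real M)\<bar> \<le> pi * e / real M"
      using abs_sin_x_le_abs_x[of "pi * e / real M"] e M by simp
    have "cmod (G M (2 * pi * e / real M)) = \<bar>sin (pi * e)\<bar> / \<bar>sin (pi * e / real M)\<bar>"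
      using h pos by (simp add: field_simps)
    also have "\<dots> \<ge> \<bar>sin (pi * e)\<bar> / (pi * e / real M)"
      using pos le e M by (intro divide_left_mono mult_pos_pos divide_pos_pos) auto
    finally have "\<bar>sin (pi * e)\<bar> / (pi * e / real M) \<le> cmod (G M (2 * pi * e / real M))" .
    hence "(\<bar>sin (pi * e)\<bar> / (pi * e / real M))^2 \<le> (cmod (G M (2 * pi * e / real M)))^2"
      using e by (intro power_mono) auto
    hence "(\<bar>sin (pi * e)\<bar> / (pi * e / real M))^2 / (real M)^2 \<le> (cmod (G M (2 * pi * e / real M)))^2 / (real M)^2"
      by (simp add: divide_right_mono)
    moreover have "(\<bar>sin (pi * e)\<bar> / (pi * e / real M))^2 / (real M)^2 = sin (pi * e)^2 / (pi^2 * e^2)"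
      using M e by (simp add: field_simps power2_eq_square)
    ultimately show ?thesis by simp
  qed
qed

context
  fixes f :: "nat \<Rightarrow> bool" and N M :: nat
  assumes N: "0 < N" and M: "0 < M"
begin

lemma th_pos: "0 < tt f N \<Longrightarrow> 0 < th f N"
proof -
  assume "0 < tt f N"
  hence "0 < sin (th f N)" unfolding sin_th[OF N] using N by simp
  moreover have "th f N \<noteq> 0 \<or> sin (th f N) = 0" by auto
  ultimately show ?thesis using th_bounds[OF N] by (metis order_le_less sin_zero)
qed

lemma sin_th_pos: "0 < tt f N \<Longrightarrow> 0 < sin (th f N)"
  unfolding sin_th[OF N] using N by simp

lemma p0_lower:
  assumes x: "real M * th f N \<le> 2"
  shows "1 - (real M * th f N)^2 / 3 \<le> pmf (count_pmf f N M) 0"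
proof (cases "th f N = 0")
  case True
  thus ?thesis unfolding count_pmf_0[OF N M] using M by simp
next
  case False
  define x where "x = real M * th f N"
  have th0: "0 < th f N" using False th_bounds(1)[OF N, of f] by linarith
  have s0: "0 < sin (th f N)"
    by (intro sin_gt_zero) (use th0 th_bounds(2)[OF N, of f] pi_gt_zero in linarith)+
  have sle: "sin (th f N) \<le> th f N" using th0 by (intro sin_x_le_x) simp
  have x0: "0 \<le> x" using th0 unfolding x_def by simp
  have x2: "x^2 \<le> 4" using x x0 unfolding x_def by (metis power2_eq_square mult_mono order_refl x_def numeral_Bit0 numeral_One mult_2 one_add_one power_mono zero_le_numeral power2_eq_square)
  have h: "cmod (G M (2 * th f N)) * sin (th f N) = \<bar>sin x\<bar>"
    using G_abs[of M "2 * th f N"] s0 unfolding x_def by simp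
  have a: "0 \<le> x - x^3 / 6" using x0 x2 by (simp add: power2_eq_square power3_eq_cube field_simps mult_left_mono)
  have "x - x^3/6 \<le> \<bar>sin x\<bar>" using sin_ge_cubic[OF x0] by linarith
  hence "(x - x^3/6) / th f N \<le> \<bar>sin x\<bar> / sin (th f N)"
    using a s0 sle th0 by (intro frac_le) auto
  also have "\<bar>sin x\<bar> / sin (th f N) = cmod (G M (2 * th f N))" using h s0 by (simp add: field_simps)
  also have "(x - x^3/6) / th f N = real M * (1 - x^2 / 6)"
    using th0 unfolding x_def by (simp add: field_simps power2_eq_square power3_eq_cube)
  finally have g: "real M * (1 - x^2 / 6) \<le> cmod (G M (2 * th f N))" .
  have "0 \<le> 1 - x^2 / 6" using x2 by simp
  hence "(real M * (1 - x^2 / 6))^2 \<le> (cmod (G M (2 * th f N)))^2" using g M by (intro power_mono) auto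
  hence "(real M)^2 * (1 - x^2 / 6)^2 \<le> (cmod (G M (2 * th f N)))^2" by (simp only: power_mult_distrib)
  hence "(1 - x^2 / 6)^2 \<le> (cmod (G M (2 * th f N)))^2 / (real M)^2" using M
    by (simp add: pos_le_divide_eq mult.commute)
  moreover have "1 - x^2 / 3 \<le> (1 - x^2 / 6)^2"
  proof -
    have "(1 - x^2/6)^2 = 1 - x^2/3 + (x^2)^2/36" by (simp add: power2_eq_square field_simps)
    moreover have "0 \<le> (x^2)^2" by simp
    ultimately show ?thesis by linarith
  qed
  ultimately show ?thesis unfolding count_pmf_0[OF N M] x_def by linarith
qed

lemma p0_upper:
  assumes "0 < tt f N"
  shows "pmf (count_pmf f N M) 0 \<le> 1 / ((real M)^2 * (sin (th f N))^2)"
proof -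
  have s0: "0 < sin (th f N)" using sin_th_pos assms by simp
  have h: "cmod (G M (2 * th f N)) * sin (th f N) = \<bar>sin (real M * th f N)\<bar>"
    using G_abs[of M "2 * th f N"] s0 by simp
  hence "cmod (G M (2 * th f N)) * sin (th f N) \<le> 1" by simp
  hence "cmod (G M (2 * th f N)) \<le> 1 / sin (th f N)" using s0 by (simp add: field_simps)
  hence "(cmod (G M (2 * th f N)))^2 \<le> (1 / sin (th f N))^2" by (intro power_mono) auto
  thus ?thesis unfolding count_pmf_0[OF N M] using M
    by (simp add: field_simps power2_eq_square divide_right_mono)
qed

lemma Tplus_minus:
  assumes "y \<le> M"
  shows "cmod (G M (- 2 * th f N - 2 * pi * real (M - y) / real M)) = cmod (G M (2 * th f N - 2 * pi * real y / real M))"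
proof -
  have "- 2 * th f N - 2 * pi * real (M - y) / real M = - (2 * th f N - 2 * pi * real y / real M) - 2 * pi"
    using assms M by (simp add: of_nat_diff field_simps)
  thus ?thesis by (simp only: G_shift norm_G_neg)
qed

lemma good_prob:
  fixes S :: "nat set"
  assumes y1: "y1 = nat \<lfloor>real M * th f N / pi\<rfloor>" and y1pos: "1 \<le> y1" and y1M: "y1 + 1 < M"
    and S: "{y1, y1 + 1, M - y1, M - (y1 + 1)} \<subseteq> S"
  shows "7/10 \<le> measure_pmf.prob (count_pmf f N M) S"
proof -
  define Tp where "Tp y = (cmod (G M (2 * th f N - 2 * pi * real y / real M)))^2" for y
  define Tm where "Tm y = (cmod (G M (- 2 * th f N - 2 * pi * real y / real M)))^2" for y
  define Y where "Y = {y1, y1 + 1, M - y1, M - (y1 + 1)}"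
  have Yfin: "finite Y" unfolding Y_def by simp
  have YM: "\<forall>y\<in>Y. y < M" unfolding Y_def using y1pos y1M by auto
  have "measure_pmf.prob (count_pmf f N M) Y \<le> measure_pmf.prob (count_pmf f N M) S"
    using S unfolding Y_def by (intro measure_pmf.finite_measure_mono) auto
  moreover have "measure_pmf.prob (count_pmf f N M) Y = (\<Sum>y\<in>Y. (Tp y + Tm y) / (2 * (real M)^2))"
    unfolding measure_measure_pmf_finite[OF Yfin] pmf_count[OF N M] Tp_def Tm_def
    using YM by (intro sum.cong refl) (simp add: count_prob_eq[OF N M])
  moreover have "(\<Sum>y\<in>Y. (Tp y + Tm y) / (2 * (real M)^2)) = ((\<Sum>y\<in>Y. Tp y) + (\<Sum>y\<in>Y. Tm y)) / (2 * (real M)^2)"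
    by (simp only: sum_divide_distrib[symmetric] sum.distrib)
  moreover have "Tp y1 + Tp (y1 + 1) \<le> (\<Sum>y\<in>Y. Tp y)"
  proof -
    have "(\<Sum>y\<in>{y1, y1+1}. Tp y) \<le> (\<Sum>y\<in>Y. Tp y)"
      using Yfin by (intro sum_mono2) (auto simp: Y_def Tp_def)
    thus ?thesis by simp
  qed
  moreover have "Tp y1 + Tp (y1 + 1) \<le> (\<Sum>y\<in>Y. Tm y)"
  proof -
    have "(\<Sum>y\<in>{M - y1, M - (y1+1)}. Tm y) \<le> (\<Sum>y\<in>Y. Tm y)"
      using Yfin by (intro sum_mono2) (auto simp: Y_def Tm_def)
    moreover have "(\<Sum>y\<in>{M - y1, M - (y1+1)}. Tm y) = Tm (M - y1) + Tm (M - (y1 + 1))"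
      using y1M by simp
    moreover have "Tm (M - y1) = Tp y1"
      unfolding Tm_def Tp_def by (subst Tplus_minus) (use y1M in auto)
    moreover have "Tm (M - (y1 + 1)) = Tp (y1 + 1)"
      unfolding Tm_def Tp_def by (subst Tplus_minus) (use y1M in auto)
    ultimately show ?thesis by simp
  qed
  moreover have "7/10 * (real M)^2 \<le> Tp y1 + Tp (y1 + 1)"
  proof -
    define x where "x = real M * th f N / pi"
    define d where "d = x - real y1"
    have x0: "0 \<le> x" unfolding x_def using th_bounds[OF N] by simp
    have fl: "real y1 \<le> x" "x < real y1 + 1" unfolding y1 d_def using x0
      by (simp_all add: x_def)
    have d: "0 \<le> d" "d < 1" unfolding d_def using fl by auto
    have e1: "2 * th f N - 2 * pi * real y1 / real M = 2 * pi * d / real M"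
      unfolding d_def x_def using M by (simp add: field_simps)
    have e2: "2 * th f N - 2 * pi * real (y1 + 1) / real M = - (2 * pi * (1 - d) / real M)"
      unfolding d_def x_def using M by (simp add: field_simps)
    have Tp1: "Tp y1 = (cmod (G M (2 * pi * d / real M)))^2" unfolding Tp_def e1 ..
    have Tp2: "Tp (y1 + 1) = (cmod (G M (2 * pi * (1 - d) / real M)))^2" unfolding Tp_def e2 norm_G_neg ..
    show ?thesis
    proof (cases "d = 0")
      case True
      hence "Tp y1 = (real M)^2" unfolding Tp1 by simp
      moreover have "0 \<le> Tp (y1 + 1)" unfolding Tp_def by simp
      ultimately show ?thesis by simp
    next
      case False
      hence d0: "0 < d" using d by simp
      have "sin (pi * d)^2 / (pi^2 * d^2) \<le> Tp y1 / (real M)^2"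
        unfolding Tp1 using G_lower[OF M d0] .
      moreover have "sin (pi * d)^2 / (pi^2 * (1 - d)^2) \<le> Tp (y1 + 1) / (real M)^2"
      proof -
        have "sin (pi * (1 - d)) = sin (pi * d)" by (simp add: right_diff_distrib sin_diff)
        thus ?thesis unfolding Tp2 using G_lower[OF M, of "1 - d"] d by simp
      qed
      ultimately have "7/10 \<le> Tp y1 / (real M)^2 + Tp (y1 + 1) / (real M)^2"
        using fejer_pair[OF d0 d(2)] by linarith
      thus ?thesis using M by (simp add: field_simps)
    qed
  qed
  ultimately have A: "measure_pmf.prob (count_pmf f N M) Y \<le> measure_pmf.prob (count_pmf f N M) S"
    "measure_pmf.prob (count_pmf f N M) Y = ((\<Sum>y\<in>Y. Tp y) + (\<Sum>y\<in>Y. Tm y)) / (2 * (real M)^2)"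
    "2 * (7/10 * (real M)^2) \<le> (\<Sum>y\<in>Y. Tp y) + (\<Sum>y\<in>Y. Tm y)" by linarith+
  have "7/10 \<le> ((\<Sum>y\<in>Y. Tp y) + (\<Sum>y\<in>Y. Tm y)) / (2 * (real M)^2)"
    using A(3) M by (simp add: pos_le_divide_eq mult.commute mult.left_commute)
  thus ?thesis using A(1,2) by linarith
qed

end


declare ac_loop.simps[simp del]

lemma ac_loop_eq: "ac_loop f N l = bind_pmf (count_pmf f N (2 ^ l)) (\<lambda>y.
       if count_est N (2 ^ l) y = 0 \<and> (2::real) ^ l < 2 * sqrt (real N)
       then ac_loop f N (Suc l) else return_pmf l)"
  by (rule ac_loop.simps)

lemma ac_support: "set_pmf (ac_loop f N l) \<subseteq> {l..max l N}"
proof (induction f N l rule: ac_loop.induct)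
  case (1 f N l)
  show ?case
  proof
    fix L assume "L \<in> set_pmf (ac_loop f N l)"
    then obtain y where y: "y \<in> set_pmf (count_pmf f N (2 ^ l))"
      and L: "L \<in> set_pmf (if count_est N (2 ^ l) y = 0 \<and> (2::real) ^ l < 2 * sqrt (real N)
       then ac_loop f N (Suc l) else return_pmf l)"
      unfolding ac_loop_eq[of f N l] by auto
    show "L \<in> {l..max l N}"
    proof (cases "count_est N (2 ^ l) y = 0 \<and> (2::real) ^ l < 2 * sqrt (real N)")
      case True
      hence "L \<in> {Suc l..max (Suc l) N}" using 1[OF y True] L by auto
      moreover have "l < N" using True ac_loop_termination_aux by blast
      ultimately show ?thesis by auto
    next
      case False
      hence "L = l" using L by (subst (asm) if_not_P) auto
      thus ?thesis by simp
    qed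
  qed
qed

lemma ac_support_finite: "finite (set_pmf (ac_loop f N l))"
  using ac_support by (rule finite_subset) simp

lemma sum_if_zero:
  fixes p :: "nat \<Rightarrow> real"
  assumes "0 < M"
  shows "(\<Sum>y<M. p y * (if y = 0 then A else B)) = (\<Sum>y<M. p y) * B + p 0 * (A - B)"
proof -
  have "(\<Sum>y<M. p y * (if y = 0 then A else B)) = (\<Sum>y<M. p y * B + (if y = 0 then p 0 * (A - B) else 0))"
    by (intro sum.cong refl) (simp add: algebra_simps)
  also have "\<dots> = (\<Sum>y<M. p y * B) + p 0 * (A - B)"
    using assms by (simp add: sum.distrib)
  finally show ?thesis by (simp add: sum_distrib_right)
qed

lemma ac_exp:
  fixes h :: "nat \<Rightarrow> real"
  assumes N: "0 < N"
  shows "measure_pmf.expectation (ac_loop f N l) h =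
    (if (2::real) ^ l < 2 * sqrt (real N)
     then pmf (count_pmf f N (2 ^ l)) 0 * measure_pmf.expectation (ac_loop f N (Suc l)) h
          + (1 - pmf (count_pmf f N (2 ^ l)) 0) * h l
     else h l)"
proof -
  define M :: nat where "M = 2 ^ l"
  have M: "0 < M" unfolding M_def by simp
  define Ec where "Ec = (if (2::real) ^ l < 2 * sqrt (real N) then measure_pmf.expectation (ac_loop f N (Suc l)) h else h l)"
  have "measure_pmf.expectation (ac_loop f N l) h =
     (\<Sum>y\<in>{..<M}. pmf (count_pmf f N M) y *\<^sub>R measure_pmf.expectation
        (if count_est N M y = 0 \<and> (2::real) ^ l < 2 * sqrt (real N) then ac_loop f N (Suc l) else return_pmf l) h)"
    unfolding ac_loop_eq[of f N l] M_def[symmetric]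
    by (rule pmf_expectation_bind) (auto simp: ac_support_finite set_pmf_count[OF N M])
  also have "\<dots> = (\<Sum>y<M. pmf (count_pmf f N M) y * (if y = 0 then Ec else h l))"
    by (intro sum.cong refl) (auto simp: count_est_zero_iff[OF N M] Ec_def)
  also have "\<dots> = (\<Sum>y<M. pmf (count_pmf f N M) y) * h l + pmf (count_pmf f N M) 0 * (Ec - h l)"
    by (rule sum_if_zero[OF M])
  also have "\<dots> = h l + pmf (count_pmf f N M) 0 * (Ec - h l)"
    by (simp add: count_pmf_sum[OF N M])
  finally have e: "measure_pmf.expectation (ac_loop f N l) h = h l + pmf (count_pmf f N M) 0 * (Ec - h l)" .
  show ?thesis
  proof (cases "(2::real) ^ l < 2 * sqrt (real N)")
    case True thus ?thesis unfolding e Ec_def M_def by (simp add: algebra_simps)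
  next
    case False thus ?thesis unfolding e Ec_def M_def by simp
  qed
qed

lemma prob_as_exp: "measure_pmf.prob p A = measure_pmf.expectation p (indicator A)"
  by simp

context
  fixes f :: "nat \<Rightarrow> bool" and N :: nat
  assumes N: "0 < N" and t: "0 < tt f N"
begin

lemma tt_ge1: "1 \<le> tt f N"
  using t unfolding tt_def[OF N] by simp

lemma cap_good:
  assumes "\<not> (2::real) ^ l < 2 * sqrt (real N)"
  shows "2 \<le> 2 ^ l * th f N"
proof -
  have th0: "0 \<le> th f N" using th_bounds(1)[OF N] .
  have "2 * sqrt (real N) * sqrt (tt f N / real N) = 2 * sqrt (tt f N)"
    using N by (simp add: real_sqrt_mult[symmetric])
  moreover have "1 \<le> sqrt (tt f N)" using tt_ge1 by simp
  moreover have "2 * sqrt (real N) * sqrt (tt f N / real N) \<le> 2 ^ l * sin (th f N)"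
    unfolding sin_th[OF N] using assms tt_ge[OF N, of f] N by (intro mult_right_mono) auto
  moreover have "sin (th f N) \<le> th f N" using th0 by (rule sin_x_le_x)
  hence "2 ^ l * sin (th f N) \<le> 2 ^ l * th f N" by simp
  ultimately show ?thesis by linarith
qed

lemma pz_bounds: "0 \<le> pmf (count_pmf f N (2 ^ l)) 0" "pmf (count_pmf f N (2 ^ l)) 0 \<le> 1"
  by (simp_all add: pmf_le_1)

lemma IH_avail:
  assumes "pmf (count_pmf f N (2 ^ l)) 0 \<noteq> 0"
  shows "0 \<in> set_pmf (count_pmf f N (2 ^ l))" "count_est N (2 ^ l) 0 = 0"
  using assms by (simp_all add: set_pmf_eq count_est_def)

lemma bad_bound:
  assumes c: "0 < c" "c \<le> 2"
  shows "measure_pmf.prob (ac_loop f N l) {L. 2 ^ L * th f N < c}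
     \<le> (if 2 ^ l * th f N < c then (4 * c^2 - (2 ^ l * th f N)^2) / 9 else 0)"
proof (induction "N - l" arbitrary: l rule: less_induct)
  case less
  define x where "x = 2 ^ l * th f N"
  define p where "p = pmf (count_pmf f N (2 ^ l)) 0"
  define P where "P l' = measure_pmf.prob (ac_loop f N l') {L. 2 ^ L * th f N < c}" for l'
  have th0: "0 \<le> th f N" using th_bounds(1)[OF N] .
  have x0: "0 \<le> x" unfolding x_def using th0 by simp
  have p: "0 \<le> p" "p \<le> 1" unfolding p_def by (simp_all add: pmf_le_1)
  have rec: "P l = (if (2::real) ^ l < 2 * sqrt (real N) then p * P (Suc l) + (1 - p) * indicator {L. 2 ^ L * th f N < c} l
                    else indicator {L. 2 ^ L * th f N < c} l)"
    unfolding P_def p_def prob_as_exp by (rule ac_exp[OF N])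
  have Pnn: "0 \<le> P l'" for l' unfolding P_def by simp
  show ?case
  proof (cases "(2::real) ^ l < 2 * sqrt (real N)")
    case False
    hence "2 \<le> x" unfolding x_def by (rule cap_good)
    hence "\<not> x < c" using c by linarith
    thus ?thesis using False rec unfolding P_def x_def by simp
  next
    case True
    hence lN: "l < N" using ac_loop_termination_aux by blast
    have e: "(2::real) ^ Suc l * th f N = 2 * x" unfolding x_def by simp
    have IH: "P (Suc l) \<le> (if 2 * x < c then (4 * c^2 - (2 * x)^2) / 9 else 0)"
      using less[of "Suc l"] lN unfolding P_def e by simp
    have rec2: "P l = p * P (Suc l) + (1 - p) * indicator {L. 2 ^ L * th f N < c} l"
      using rec True by simp
    show ?thesis
    proof (cases "x < c")
      case False
      hence "\<not> 2 * x < c" using x0 by linarith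
      hence "P (Suc l) \<le> 0" using IH by simp
      hence "p * P (Suc l) \<le> 0" using p by (simp add: mult_nonneg_nonpos)
      thus ?thesis using rec2 False unfolding P_def x_def by simp
    next
      case True
      have ind: "indicator {L. 2 ^ L * th f N < c} l = (1::real)" using True unfolding x_def by simp
      have pl: "1 - x^2 / 3 \<le> p" unfolding p_def x_def
        using p0_lower[OF N, of "2 ^ l" f] True c unfolding x_def by simp
      have pP: "p * P (Suc l) \<le> (4 * c^2 - (2 * x)^2) / 9"
      proof (cases "2 * x < c")
        case True
        hence "P (Suc l) \<le> (4 * c^2 - (2 * x)^2) / 9" using IH by simp
        moreover have "p * P (Suc l) \<le> P (Suc l)" using p Pnn[of "Suc l"] by (simp add: mult_left_le_one_le)
        ultimately show ?thesis by linarith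
      next
        case False
        hence "P (Suc l) \<le> 0" using IH by simp
        hence "p * P (Suc l) \<le> 0" using p by (simp add: mult_nonneg_nonpos)
        moreover have "0 \<le> (4 * c^2 - (2 * x)^2) / 9"
        proof -
          have "x^2 \<le> c^2" using True x0 by (intro power_mono) auto
          thus ?thesis by (simp add: power_mult_distrib)
        qed
        ultimately show ?thesis by linarith
      qed
      have Pl: "P l = p * P (Suc l) + (1 - p)" using rec2 ind by simp
      have "P l \<le> (4 * c^2 - (2 * x)^2) / 9 + x^2 / 3" using Pl pP pl by linarith
      also have "\<dots> = (4 * c^2 - x^2) / 9" by (simp add: power_mult_distrib field_simps)
      finally show ?thesis using True unfolding P_def x_def by simp
    qed
  qed
qed

lemma exp_upper:
  "measure_pmf.expectation (ac_loop f N l) (\<lambda>L. (2::real) ^ L)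
     \<le> (if (2::real) ^ l < 2 / sin (th f N) then 12 / sin (th f N) - 2 ^ l else 2 * 2 ^ l)"
proof (induction "N - l" arbitrary: l rule: less_induct)
  case less
  define s where "s = 1 / sin (th f N)"
  have s0: "0 < sin (th f N)" using sin_th_pos[of N 1 f] N t by simp
  have s1: "1 \<le> s" unfolding s_def using s0 sin_le_one[of "th f N"] by simp
  define p where "p = pmf (count_pmf f N (2 ^ l)) 0"
  define E where "E l' = measure_pmf.expectation (ac_loop f N l') (\<lambda>L. (2::real) ^ L)" for l'
  define H where "H l' = (if (2::real) ^ l' < 2 * s then 12 * s - 2 ^ l' else 2 * 2 ^ l')" for l'
  have Hge: "2 ^ l' \<le> H l'" for l' unfolding H_def using s1 by auto
  have H0: "0 \<le> H l'" for l' using Hge[of l'] by (smt (verit) zero_le_power)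
  have p: "0 \<le> p" "p \<le> 1" unfolding p_def by (simp_all add: pmf_le_1)
  have rec: "E l = (if (2::real) ^ l < 2 * sqrt (real N) then p * E (Suc l) + (1 - p) * 2 ^ l else 2 ^ l)"
    unfolding E_def p_def by (rule ac_exp[OF N])
  have goal: "E l \<le> H l"
  proof (cases "(2::real) ^ l < 2 * sqrt (real N)")
    case False thus ?thesis using rec Hge by simp
  next
    case True
    hence "l < N" using ac_loop_termination_aux by blast
    hence "N - Suc l < N - l" by simp
    note IH0 = less[OF this]
    have e1: "2 / sin (th f N) = 2 * s" "12 / sin (th f N) = 12 * s" unfolding s_def by simp_all
    have IH: "E (Suc l) \<le> H (Suc l)" using IH0 unfolding E_def H_def e1 .

    have rec2: "E l = p * E (Suc l) + (1 - p) * 2 ^ l" using rec True by simp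
    have pE: "p * E (Suc l) \<le> p * H (Suc l)" using IH p by (simp add: mult_left_mono)
    show ?thesis
    proof (cases "(2::real) ^ l < 2 * s")
      case True
      have "p * H (Suc l) \<le> H (Suc l)" using p H0[of "Suc l"] by (simp add: mult_left_le_one_le)
      moreover have "(1 - p) * 2 ^ l \<le> (2::real) ^ l" using p by simp
      moreover have "H (Suc l) + 2 ^ l \<le> 12 * s - 2 ^ l"
        unfolding H_def using True by auto
      moreover have "H l = 12 * s - 2 ^ l" unfolding H_def using True by simp
      ultimately show ?thesis using rec2 pE by linarith
    next
      case False
      have pu: "p \<le> 1 / ((2 ^ l)^2 * (sin (th f N))^2)"
        unfolding p_def using p0_upper[of N "2 ^ l" f] N t by simp
      have "(2 * s)^2 \<le> ((2::real) ^ l)^2" using False s1 by (intro power_mono) auto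
      hence "4 * s^2 \<le> ((2::real) ^ l)^2" by (simp add: power_mult_distrib)
      hence "1 / ((2 ^ l)^2 * (sin (th f N))^2) \<le> 1 / 4"
        unfolding s_def using s0 by (simp add: field_simps power_divide)
      hence p4: "p \<le> 1/4" using pu by linarith
      have HS: "H (Suc l) = 4 * 2 ^ l" unfolding H_def using False s1 by auto
      have "E l \<le> p * (4 * 2 ^ l) + (1 - p) * 2 ^ l" using rec2 pE HS by simp
      also have "\<dots> = 2 ^ l + 3 * p * 2 ^ l" by (simp add: algebra_simps)
      also have "\<dots> \<le> 2 ^ l + 3 * (1/4) * 2 ^ l" using p4 by (intro add_left_mono mult_right_mono) auto
      also have "\<dots> \<le> H l" unfolding H_def using False by auto
      finally show ?thesis .
    qed
  qed
  have e1: "2 / sin (th f N) = 2 * s" "12 / sin (th f N) = 12 * s" unfolding s_def by simp_all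
  show ?case using goal unfolding E_def H_def e1 .
qed

end


declare ac_loop.simps[simp del]

lemma th_t0: "0 < N \<Longrightarrow> tt f N = 0 \<Longrightarrow> th f N = 0"
  unfolding th_def theta_def tt_def by simp

lemma count_support_t0:
  assumes N: "0 < N" and M: "0 < M" and t: "tt f N = 0"
  shows "set_pmf (count_pmf f N M) = {0}"
proof -
  have z: "pmf (count_pmf f N M) y = 0" if "y \<noteq> 0" for y
  proof (cases "y < M")
    case True
    have "G M (2 * pi * real_of_int (- int y) / real M) = 0"
      using True that M by (intro G_orth) auto
    hence g: "G M (- 2 * pi * real y / real M) = 0" by simp
    show ?thesis unfolding pmf_count[OF N M] count_prob_eq[OF N M True] th_t0[OF N t] using g by simp
  next
    case False thus ?thesis unfolding pmf_count[OF N M] count_prob_def by simp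
  qed
  hence "set_pmf (count_pmf f N M) \<subseteq> {0}" by (auto simp: set_pmf_eq)
  moreover have "set_pmf (count_pmf f N M) \<noteq> {}" by (rule set_pmf_not_empty)
  ultimately show ?thesis by blast
qed

lemma ac_set_t0:
  assumes N: "0 < N" and t: "tt f N = 0"
  shows "set_pmf (ac_loop f N l) = (if (2::real) ^ l < 2 * sqrt (real N) then set_pmf (ac_loop f N (Suc l)) else {l})"
proof -
  have "set_pmf (ac_loop f N l) = set_pmf (if count_est N (2 ^ l) 0 = 0 \<and> (2::real) ^ l < 2 * sqrt (real N)
       then ac_loop f N (Suc l) else return_pmf l)"
  proof -
    have cs: "set_pmf (count_pmf f N (2 ^ l)) = {0}" by (rule count_support_t0[OF N _ t]) simp
    show ?thesis unfolding ac_loop_eq[of f N l] set_bind_pmf cs by simp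
  qed
  thus ?thesis by (simp add: count_est_def)
qed

lemma ac_support_t0:
  assumes N: "0 < N" and t: "tt f N = 0"
  shows "L \<in> set_pmf (ac_loop f N l) \<Longrightarrow> 2 * sqrt (real N) \<le> 2 ^ L \<and> (2::real) ^ L \<le> max (2 ^ l) (4 * sqrt (real N))"
proof (induction "N - l" arbitrary: l rule: less_induct)
  case less
  show ?case
  proof (cases "(2::real) ^ l < 2 * sqrt (real N)")
    case True
    hence lN: "l < N" using ac_loop_termination_aux by blast
    have L: "L \<in> set_pmf (ac_loop f N (Suc l))" using less.prems True ac_set_t0[OF N t, of l] by simp
    have "2 * sqrt (real N) \<le> 2 ^ L \<and> (2::real) ^ L \<le> max (2 ^ Suc l) (4 * sqrt (real N))"
      using less.hyps[of "Suc l"] lN L by simp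
    moreover have "(2::real) ^ Suc l \<le> 4 * sqrt (real N)" using True by simp
    ultimately show ?thesis by simp
  next
    case False
    hence "L = l" using less.prems ac_set_t0[OF N t, of l] by simp
    thus ?thesis using False by simp
  qed
qed

lemma sum_pow2_bound: "real (\<Sum>k\<in>{1..L}. (2::nat) ^ k) \<le> 2 * 2 ^ L"
proof (induction L)
  case (Suc L)
  have "{1..Suc L} = insert (Suc L) {1..L}" by auto
  hence "(\<Sum>k\<in>{1..Suc L}. (2::nat) ^ k) = 2 ^ Suc L + (\<Sum>k\<in>{1..L}. 2 ^ k)" by simp
  thus ?case using Suc by simp
qed simp

lemma sin_sq_diff: fixes a b :: real shows "sin a ^ 2 - sin b ^ 2 = sin (a - b) * sin (a + b)"
proof -
  have "sin (a - b) * sin (a + b) = (sin a * cos b)^2 - (cos a * sin b)^2"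
  proof -
    have sd: "sin (a - b) = sin a * cos b - cos a * sin b" using sin_add[of a "-b"] by simp
    show ?thesis unfolding sd sin_add by (simp add: power2_eq_square algebra_simps)
  qed
  also have "\<dots> = sin a ^ 2 * (1 - sin b ^ 2) - (1 - sin a ^ 2) * sin b ^ 2"
    by (simp add: power_mult_distrib cos_squared_eq)
  finally show ?thesis by (simp add: algebra_simps)
qed

lemma err_bound:
  fixes Nr th a \<kappa> \<epsilon> :: real
  assumes Nr: "0 \<le> Nr" and th: "0 \<le> th" "th \<le> pi / 2" and k: "0 \<le> \<kappa>"
    and a: "\<bar>a - th\<bar> \<le> \<kappa> * sin th" and ke: "\<kappa> * (2 + \<kappa>) \<le> \<epsilon> / 3"
  shows "\<bar>Nr * sin a ^ 2 - Nr * sin th ^ 2\<bar> \<le> \<epsilon> * (Nr * sin th ^ 2) / 3"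
proof -
  define s where "s = sin th"
  have s0: "0 \<le> s" unfolding s_def using th by (intro sin_ge_zero) auto
  have c0: "0 \<le> cos th" using th by (intro cos_ge_zero) auto
  have d: "\<bar>sin (a - th)\<bar> \<le> \<kappa> * s" using abs_sin_x_le_abs_x[of "a - th"] a unfolding s_def by linarith
  have "sin (a + th) = sin (2 * th + (a - th))" by (simp add: algebra_simps)
  also have "\<dots> = sin (2 * th) * cos (a - th) + cos (2 * th) * sin (a - th)" by (rule sin_add)
  finally have "\<bar>sin (a + th)\<bar> \<le> \<bar>sin (2 * th) * cos (a - th)\<bar> + \<bar>cos (2 * th) * sin (a - th)\<bar>"
    by (simp only: abs_triangle_ineq)
  also have "\<dots> = \<bar>sin (2 * th)\<bar> * \<bar>cos (a - th)\<bar> + \<bar>cos (2 * th)\<bar> * \<bar>sin (a - th)\<bar>"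
    by (simp only: abs_mult)
  also have "\<dots> \<le> \<bar>sin (2 * th)\<bar> * 1 + 1 * \<bar>sin (a - th)\<bar>"
    by (intro add_mono mult_left_mono mult_right_mono) auto
  also have "\<bar>sin (2 * th)\<bar> = 2 * s * cos th" unfolding s_def sin_double using s0 c0 s_def by simp
  also have "2 * s * cos th \<le> 2 * s" using mult_left_le[OF cos_le_one[of th], of "2 * s"] s0 by simp
  finally have e: "\<bar>sin (a + th)\<bar> \<le> 2 * s + \<kappa> * s" using d by linarith
  have "\<bar>sin a ^ 2 - sin th ^ 2\<bar> = \<bar>sin (a - th)\<bar> * \<bar>sin (a + th)\<bar>" by (simp add: sin_sq_diff abs_mult)
  also have "\<dots> \<le> (\<kappa> * s) * (2 * s + \<kappa> * s)" using d e by (intro mult_mono) auto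
  also have "\<dots> = (\<kappa> * (2 + \<kappa>)) * s^2" by (simp add: power2_eq_square algebra_simps)
  also have "\<dots> \<le> \<epsilon> / 3 * s^2" using ke by (intro mult_right_mono) auto
  finally have "\<bar>sin a ^ 2 - sin th ^ 2\<bar> \<le> \<epsilon> / 3 * s^2" .
  hence "Nr * \<bar>sin a ^ 2 - sin th ^ 2\<bar> \<le> Nr * (\<epsilon> / 3 * s^2)" using Nr by (intro mult_left_mono) auto
  moreover have "\<bar>Nr * sin a ^ 2 - Nr * sin th ^ 2\<bar> = Nr * \<bar>sin a ^ 2 - sin th ^ 2\<bar>"
    using Nr by (simp add: right_diff_distrib[symmetric] abs_mult)
  ultimately show ?thesis unfolding s_def by (simp add: algebra_simps)
qed

lemma round_ok:
  fixes r :: int and t est \<epsilon> :: real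
  assumes t: "t \<in> \<int>" and r: "\<bar>real_of_int r - est\<bar> \<le> 2/3" and e: "\<bar>est - t\<bar> \<le> \<epsilon> * t / 3"
    and tp: "0 \<le> \<epsilon> * t"
  shows "\<bar>real_of_int r - t\<bar> \<le> \<epsilon> * t"
proof (cases "1 \<le> \<epsilon> * t")
  case True thus ?thesis using r e by linarith
next
  case False
  obtain ti where ti: "t = of_int ti" using t by (auto elim: Ints_cases)
  have "\<bar>real_of_int r - t\<bar> < 1" using r e False by linarith
  hence "\<bar>r - ti\<bar> < 1" unfolding ti by linarith
  hence "r = ti" by linarith
  thus ?thesis using tp ti by simp
qed


declare ac_loop.simps[simp del]

definition Mf :: "real \<Rightarrow> nat \<Rightarrow> nat" where
  "Mf \<epsilon> l = nat \<lceil>20 * pi\<^sup>2 / \<epsilon> * 2 ^ l\<rceil>"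

lemma approx_alt: "approx_count f N \<epsilon> = bind_pmf (ac_loop f N 1) (\<lambda>l. map_pmf (\<lambda>y. (l, Mf \<epsilon> l, y)) (count_pmf f N (Mf \<epsilon> l)))"
  unfolding approx_count_def Let_def Mf_def map_pmf_def ..

lemma Mf_bounds:
  assumes "0 < \<epsilon>"
  shows "20 * pi\<^sup>2 / \<epsilon> * 2 ^ l \<le> real (Mf \<epsilon> l)" "real (Mf \<epsilon> l) \<le> 20 * pi\<^sup>2 / \<epsilon> * 2 ^ l + 1" "0 < Mf \<epsilon> l"
proof -
  define x where "x = 20 * pi\<^sup>2 / \<epsilon> * 2 ^ l"
  have p: "0 < x" unfolding x_def using assms by simp
  have c0: "0 \<le> \<lceil>x\<rceil>" using p by simp
  have e: "real (Mf \<epsilon> l) = of_int \<lceil>x\<rceil>" unfolding Mf_def x_def[symmetric] using c0 by simp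
  show "20 * pi\<^sup>2 / \<epsilon> * 2 ^ l \<le> real (Mf \<epsilon> l)" unfolding e x_def[symmetric] by (rule le_of_int_ceiling)
  show "real (Mf \<epsilon> l) \<le> 20 * pi\<^sup>2 / \<epsilon> * 2 ^ l + 1" unfolding e x_def[symmetric] by (rule of_int_ceiling_le_add_one)
  show "0 < Mf \<epsilon> l" unfolding Mf_def x_def[symmetric] using p by simp
qed

lemma prob_bind_finite:
  assumes "finite (set_pmf p)" "\<And>x. finite (set_pmf (g x))"
  shows "measure_pmf.prob (bind_pmf p g) S = measure_pmf.expectation p (\<lambda>x. measure_pmf.prob (g x) S)"
proof -
  have "measure_pmf.prob (bind_pmf p g) S = (\<Sum>a\<in>set_pmf p. pmf p a *\<^sub>R measure_pmf.expectation (g a) (indicator S))"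
    unfolding prob_as_exp using assms by (intro pmf_expectation_bind) auto
  also have "\<dots> = measure_pmf.expectation p (\<lambda>x. measure_pmf.prob (g x) S)"
    using assms by (subst integral_measure_pmf[of "set_pmf p"]) auto
  finally show ?thesis .
qed

lemma est_mirror: "0 < M \<Longrightarrow> y \<le> M \<Longrightarrow> count_est N M (M - y) = count_est N M y"
proof -
  assume M: "0 < M" and y: "y \<le> M"
  have "pi * real (M - y) / real M = pi - pi * real y / real M" using M y by (simp add: of_nat_diff field_simps)
  thus ?thesis unfolding count_est_def by (simp add: sin_pi_minus)
qed

lemma good_l:
  fixes rnd :: "real \<Rightarrow> int"
  assumes rnd: "\<forall>x. \<bar>real_of_int (rnd x) - x\<bar> \<le> 2/3"
    and N: "0 < N" and t: "0 < tt f N" and eps: "0 < \<epsilon>" "\<epsilon> \<le> 1"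
    and g: "1/4 \<le> 2 ^ l * th f N"
  shows "7/10 \<le> measure_pmf.prob (count_pmf f N (Mf \<epsilon> l))
     {y. \<bar>real_of_int (rnd (count_est N (Mf \<epsilon> l) y)) - real (num_sol f N)\<bar> \<le> \<epsilon> * real (num_sol f N)}"
proof -
  define M where "M = Mf \<epsilon> l"
  define \<theta> where "\<theta> = th f N"
  define S where "S = {y. \<bar>real_of_int (rnd (count_est N M y)) - real (num_sol f N)\<bar> \<le> \<epsilon> * real (num_sol f N)}"
  have Mlo: "20 * pi\<^sup>2 / \<epsilon> * 2 ^ l \<le> real M" and M0: "0 < M" unfolding M_def using Mf_bounds[OF eps(1)] by auto
  have th0: "0 < \<theta>"
  proof (rule ccontr)
    assume "\<not> 0 < \<theta>"
    hence "2 ^ l * \<theta> \<le> 0" by (simp add: mult_nonneg_nonpos)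
    thus False using g unfolding \<theta>_def by simp
  qed
  have thpi: "\<theta> \<le> pi / 2" unfolding \<theta>_def by (rule th_bounds(2)[OF N])
  have sth: "\<theta> / 2 \<le> sin \<theta>" using th0 thpi by (intro sin_ge_half) auto
  have tt: "real N * sin \<theta> ^ 2 = real (num_sol f N)"
    unfolding \<theta>_def sin_th[OF N] using N tt_ge[OF N, of f] by (simp add: tt_def[OF N])
  have pow0: "(0::real) < 2 ^ l" by simp
  have Mth: "5 * pi\<^sup>2 \<le> real M * \<theta>"
  proof -
    have "20 * pi\<^sup>2 * (2 ^ l * \<theta>) \<le> 20 * pi\<^sup>2 / \<epsilon> * (2 ^ l * \<theta>)"
      using eps th0 by (intro mult_right_mono) (auto simp: field_simps)
    also have "\<dots> = 20 * pi\<^sup>2 / \<epsilon> * 2 ^ l * \<theta>" by simp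
    also have "\<dots> \<le> real M * \<theta>" using Mlo th0 by (intro mult_right_mono) auto
    finally have "20 * pi\<^sup>2 * (2 ^ l * \<theta>) \<le> real M * \<theta>" .
    moreover have "20 * pi\<^sup>2 * (1/4) \<le> 20 * pi\<^sup>2 * (2 ^ l * \<theta>)" using g unfolding \<theta>_def by (intro mult_left_mono) auto
    ultimately show ?thesis by linarith
  qed
  define x where "x = real M * \<theta> / pi"
  define y1 where "y1 = nat \<lfloor>x\<rfloor>"
  have x1: "1 \<le> x"
  proof -
    have "pi \<le> 5 * pi\<^sup>2" using pi_gt3 by (simp add: power2_eq_square)
    thus ?thesis using Mth unfolding x_def by (simp add: field_simps)
  qed
  have fl: "real y1 \<le> x" "x < real y1 + 1" unfolding y1_def using x1 by linarith+
  have y1pos: "1 \<le> y1" unfolding y1_def using x1 by linarith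
  have xM: "x \<le> real M / 2" unfolding x_def using thpi M0 by (simp add: field_simps)
  have M4: "4 \<le> real M"
  proof -
    have "3 * 3 \<le> pi * pi" using pi_gt3 by (intro mult_mono) auto
    hence "4 \<le> 20 * pi\<^sup>2 * 1" by (simp add: power2_eq_square)
    also have "\<dots> \<le> 20 * pi\<^sup>2 / \<epsilon> * 2 ^ l" using eps
      by (intro mult_mono) (auto simp: field_simps one_le_power)
    finally show ?thesis using Mlo by linarith
  qed
  have y1M: "y1 + 1 < M" using fl xM M4 by linarith
  have close: "pi / real M \<le> \<epsilon> / 7 * sin \<theta>"
  proof -
    have "pi / real M \<le> pi / (20 * pi\<^sup>2 / \<epsilon> * 2 ^ l)" by (intro divide_left_mono) (use Mlo eps M0 in \<open>auto intro!: divide_pos_pos mult_pos_pos\<close>)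
    also have "\<dots> = \<epsilon> / (20 * pi * 2 ^ l)" using eps by (simp add: power2_eq_square field_simps)
    also have "\<dots> \<le> \<epsilon> / (56 * 2 ^ l)" using eps pi_gt3 by (intro divide_left_mono mult_right_mono) auto
    also have "\<dots> = \<epsilon> / 14 * (1 / (4 * 2 ^ l))" by simp
    also have "\<dots> \<le> \<epsilon> / 14 * \<theta>" using g eps unfolding \<theta>_def by (intro mult_left_mono) (auto simp: field_simps)
    also have "\<dots> \<le> \<epsilon> / 7 * sin \<theta>" using sth eps by (simp add: field_simps)
    finally show ?thesis .
  qed
  have succ: "y \<in> S" if y: "\<bar>real y - x\<bar> \<le> 1" for y
  proof -
    have a: "\<bar>pi * real y / real M - \<theta>\<bar> \<le> \<epsilon> / 7 * sin \<theta>"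
    proof -
      have "\<bar>pi * real y / real M - \<theta>\<bar> = pi / real M * \<bar>real y - x\<bar>"
        unfolding x_def using M0 by (simp add: field_simps abs_mult[symmetric] abs_divide)
      also have "\<dots> \<le> pi / real M * 1" using y by (intro mult_left_mono) auto
      finally have "\<bar>pi * real y / real M - \<theta>\<bar> \<le> pi / real M" by simp
      thus ?thesis using close by linarith
    qed
    have "\<bar>real N * sin (pi * real y / real M) ^ 2 - real N * sin \<theta> ^ 2\<bar> \<le> \<epsilon> * (real N * sin \<theta> ^ 2) / 3"
      using eps th0 thpi a by (intro err_bound[where \<kappa>="\<epsilon> / 7"]) (auto simp: field_simps)
    hence e: "\<bar>count_est N M y - real (num_sol f N)\<bar> \<le> \<epsilon> * real (num_sol f N) / 3"
      unfolding count_est_def tt by simp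
    show ?thesis unfolding S_def using round_ok[OF _ _ e] rnd eps by simp
  qed
  have "{y1, y1 + 1, M - y1, M - (y1 + 1)} \<subseteq> S"
  proof -
    have "y1 \<in> S" "y1 + 1 \<in> S" using fl by (auto intro!: succ)
    moreover have "M - y1 \<in> S" "M - (y1 + 1) \<in> S"
      using \<open>y1 \<in> S\<close> \<open>y1 + 1 \<in> S\<close> y1M M0 unfolding S_def by (simp_all add: est_mirror)
    ultimately show ?thesis by auto
  qed
  hence "7/10 \<le> measure_pmf.prob (count_pmf f N M) S"
    using good_prob[OF N M0, of y1 f S] y1pos y1M unfolding y1_def x_def \<theta>_def by simp
  thus ?thesis unfolding S_def M_def .
qed

lemma exp_bind_finite:
  fixes h :: "'b \<Rightarrow> real"
  assumes "finite (set_pmf p)" "\<And>x. finite (set_pmf (g x))"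
  shows "measure_pmf.expectation (bind_pmf p g) h = measure_pmf.expectation p (\<lambda>x. measure_pmf.expectation (g x) h)"
proof -
  have "measure_pmf.expectation (bind_pmf p g) h = (\<Sum>a\<in>set_pmf p. pmf p a *\<^sub>R measure_pmf.expectation (g a) h)"
    using assms by (intro pmf_expectation_bind) auto
  also have "\<dots> = measure_pmf.expectation p (\<lambda>x. measure_pmf.expectation (g x) h)"
    using assms by (subst integral_measure_pmf[of "set_pmf p"]) auto
  finally show ?thesis .
qed

lemma count_fin:
  assumes "0 < N" "0 < M"
  shows "finite (set_pmf (count_pmf f N M))"
proof (rule finite_subset)
  show "set_pmf (count_pmf f N M) \<subseteq> {..<M}" by (rule set_pmf_count[OF assms])
qed simp

lemma exp_lin_ind:
  fixes p :: "nat pmf"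
  assumes "finite (set_pmf p)" "\<And>x. a * (1 - indicator B x) \<le> h x"
  shows "a * (1 - measure_pmf.prob p B) \<le> measure_pmf.expectation p h"
proof -
  have i: "integrable (measure_pmf p) g" for g :: "nat \<Rightarrow> real" using assms(1) by (rule integrable_measure_pmf_finite)
  have "measure_pmf.expectation p (\<lambda>x. a * (1 - indicator B x)) \<le> measure_pmf.expectation p h"
    using assms(2) by (intro integral_mono i) auto
  moreover have "measure_pmf.expectation p (\<lambda>x. 1 - indicator B x) = 1 - measure_pmf.prob p B"
    using i by (simp add: integral_diff)
  moreover have "measure_pmf.expectation p (\<lambda>x. a * (1 - indicator B x)) = a * measure_pmf.expectation p (\<lambda>x. 1 - indicator B x)"
    by simp
  ultimately show ?thesis by simp
qed

lemma claimA_pos: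
  fixes rnd :: "real \<Rightarrow> int"
  assumes rnd: "\<forall>x. \<bar>real_of_int (rnd x) - x\<bar> \<le> 2/3"
    and N: "0 < N" and t: "0 < tt f N" and eps: "0 < \<epsilon>" "\<epsilon> \<le> 1"
  shows "2/3 \<le> measure_pmf.prob (approx_count f N \<epsilon>)
         {(l, M, y). \<bar>real_of_int (rnd (count_est N M y)) - real (num_sol f N)\<bar>
                       \<le> \<epsilon> * real (num_sol f N)}" (is "_ \<le> measure_pmf.prob _ ?S")
proof -
  define \<phi> where "\<phi> l = measure_pmf.prob (count_pmf f N (Mf \<epsilon> l))
     {y. \<bar>real_of_int (rnd (count_est N (Mf \<epsilon> l) y)) - real (num_sol f N)\<bar> \<le> \<epsilon> * real (num_sol f N)}" for l
  have "measure_pmf.prob (approx_count f N \<epsilon>) ?S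
      = measure_pmf.expectation (ac_loop f N 1) (\<lambda>l. measure_pmf.prob (map_pmf (\<lambda>y. (l, Mf \<epsilon> l, y)) (count_pmf f N (Mf \<epsilon> l))) ?S)"
    unfolding approx_alt using N Mf_bounds(3)[OF eps(1)]
    by (intro prob_bind_finite) (auto simp: ac_support_finite count_fin)
  also have "\<dots> = measure_pmf.expectation (ac_loop f N 1) \<phi>"
    unfolding \<phi>_def by (intro Bochner_Integration.integral_cong refl) (simp add: vimage_def)
  finally have e: "measure_pmf.prob (approx_count f N \<epsilon>) ?S = measure_pmf.expectation (ac_loop f N 1) \<phi>" .
  define B where "B = {L. 2 ^ L * th f N < 1/4}"
  have pt: "7/10 * (1 - indicator B l) \<le> \<phi> l" for l
  proof (cases "l \<in> B")
    case True thus ?thesis unfolding \<phi>_def by simp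
  next
    case False
    hence "1/4 \<le> 2 ^ l * th f N" unfolding B_def by simp
    thus ?thesis using good_l[OF rnd N t eps] False unfolding \<phi>_def by simp
  qed
  have "7/10 * (1 - measure_pmf.prob (ac_loop f N 1) B) \<le> measure_pmf.expectation (ac_loop f N 1) \<phi>"
    by (rule exp_lin_ind[OF ac_support_finite pt])
  moreover have "measure_pmf.prob (ac_loop f N 1) B \<le> 1/36"
  proof -
    have "measure_pmf.prob (ac_loop f N 1) B \<le> (if 2 ^ 1 * th f N < 1/4 then (4 * (1/4)^2 - (2 ^ 1 * th f N)^2) / 9 else 0)"
      unfolding B_def by (rule bad_bound[OF N t]) auto
    moreover have "(4 * (1/4)^2 - (2 ^ 1 * th f N)^2) / 9 \<le> (1/36::real)"
    proof -
      have y: "0 \<le> (2 ^ 1 * th f N)^2" by simp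
      have q: "4 * (1/4)^2 = (1/4::real)" by (simp add: power2_eq_square)
      show ?thesis unfolding q using y by simp
    qed
    ultimately show ?thesis by (auto split: if_splits)
  qed
  ultimately have "2/3 \<le> measure_pmf.expectation (ac_loop f N 1) \<phi>"
  proof -
    assume a1: "7/10 * (1 - measure_pmf.prob (ac_loop f N 1) B) \<le> measure_pmf.expectation (ac_loop f N 1) \<phi>"
      and a2: "measure_pmf.prob (ac_loop f N 1) B \<le> 1/36"
    have "(2/3::real) \<le> 7/10 * (1 - 1/36)" by simp
    also have "\<dots> \<le> 7/10 * (1 - measure_pmf.prob (ac_loop f N 1) B)" using a2 by simp
    also note a1
    finally show ?thesis .
  qed
  thus ?thesis unfolding e .
qed

definition evn :: "real \<Rightarrow> nat \<Rightarrow> real" where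
  "evn \<epsilon> l = real (\<Sum>k\<in>{1..l}. (2::nat) ^ k) + real (Mf \<epsilon> l)"

lemma exp_evals:
  assumes N: "0 < N" and eps: "0 < \<epsilon>"
  shows "measure_pmf.expectation (approx_count f N \<epsilon>) (\<lambda>r. real (ac_evals r))
       = measure_pmf.expectation (ac_loop f N 1) (evn \<epsilon>)"
proof -
  have "measure_pmf.expectation (approx_count f N \<epsilon>) (\<lambda>r. real (ac_evals r))
      = measure_pmf.expectation (ac_loop f N 1) (\<lambda>l. measure_pmf.expectation (map_pmf (\<lambda>y. (l, Mf \<epsilon> l, y)) (count_pmf f N (Mf \<epsilon> l))) (\<lambda>r. real (ac_evals r)))"
    unfolding approx_alt using N Mf_bounds(3)[OF eps]
    by (intro exp_bind_finite) (auto simp: ac_support_finite count_fin)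
  also have "\<dots> = measure_pmf.expectation (ac_loop f N 1) (evn \<epsilon>)"
    by (intro Bochner_Integration.integral_cong refl) (simp add: ac_evals_def evn_def)
  finally show ?thesis .
qed

lemma evn_lower: assumes "0 < \<epsilon>" shows "20 * pi\<^sup>2 / \<epsilon> * 2 ^ l \<le> evn \<epsilon> l"
proof -
  have "0 \<le> real (\<Sum>k\<in>{1..l}. (2::nat) ^ k)" by (rule of_nat_0_le_iff)
  thus ?thesis unfolding evn_def using Mf_bounds(1)[OF assms, of l] by linarith
qed

lemma evn_upper:
  assumes "0 < \<epsilon>" "\<epsilon> \<le> 1"
  shows "evn \<epsilon> l \<le> (3 + 20 * pi\<^sup>2) / \<epsilon> * 2 ^ l"
proof -
  have a: "real (\<Sum>k\<in>{1..l}. (2::nat) ^ k) \<le> 2 * 2 ^ l" by (rule sum_pow2_bound)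
  have b: "real (Mf \<epsilon> l) \<le> 20 * pi\<^sup>2 / \<epsilon> * 2 ^ l + 1" using Mf_bounds(2)[OF assms(1)] .
  have c: "2 * (2::real) ^ l \<le> 2 / \<epsilon> * 2 ^ l" using assms by (intro mult_right_mono) (auto simp: field_simps)
  have d: "(1::real) \<le> 1 / \<epsilon> * 2 ^ l"
  proof -
    have "(1::real) \<le> 2 ^ l" by simp
    also have "(1::real) * 2 ^ l \<le> 1 / \<epsilon> * 2 ^ l" using assms by (intro mult_right_mono) (auto simp: field_simps)
    finally show ?thesis by simp
  qed
  have "evn \<epsilon> l \<le> 2 / \<epsilon> * 2 ^ l + 20 * pi\<^sup>2 / \<epsilon> * 2 ^ l + 1 / \<epsilon> * 2 ^ l"
    unfolding evn_def using a b c d by linarith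
  also have "\<dots> = (3 + 20 * pi\<^sup>2) / \<epsilon> * 2 ^ l" using assms by (simp add: field_simps)
  finally show ?thesis .
qed

lemma inv_sin_th: "0 < N \<Longrightarrow> 0 < tt f N \<Longrightarrow> 1 / sin (th f N) = sqrt (real N / real (num_sol f N))"
  unfolding sin_th tt_def by (simp add: real_sqrt_divide)

lemma claimB:
  assumes N: "0 < N" and t: "0 < tt f N" and eps: "0 < \<epsilon>" "\<epsilon> \<le> 1"
  shows "1 * (1 / \<epsilon>) * sqrt (real N / real (num_sol f N))
           \<le> measure_pmf.expectation (approx_count f N \<epsilon>) (\<lambda>r. real (ac_evals r))"
    "measure_pmf.expectation (approx_count f N \<epsilon>) (\<lambda>r. real (ac_evals r))
           \<le> (16 * (3 + 20 * pi\<^sup>2)) * (1 / \<epsilon>) * sqrt (real N / real (num_sol f N))"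
proof -
  define s where "s = 1 / sin (th f N)"
  have s0: "0 < sin (th f N)" using sin_th_pos[of N 1 f] N t by simp
  have s1: "1 \<le> s" unfolding s_def using s0 sin_le_one[of "th f N"] by simp
  have sq: "sqrt (real N / real (num_sol f N)) = s" unfolding s_def using inv_sin_th[OF N t] by simp
  have i: "integrable (measure_pmf (ac_loop f N 1)) g" for g :: "nat \<Rightarrow> real"
    by (rule integrable_measure_pmf_finite[OF ac_support_finite])
  note E = exp_evals[OF N eps(1)]
  have "measure_pmf.expectation (ac_loop f N 1) (evn \<epsilon>)
      \<le> measure_pmf.expectation (ac_loop f N 1) (\<lambda>l. (3 + 20 * pi\<^sup>2) / \<epsilon> * 2 ^ l)"
    using evn_upper[OF eps] by (intro integral_mono i) auto
  also have "\<dots> = (3 + 20 * pi\<^sup>2) / \<epsilon> * measure_pmf.expectation (ac_loop f N 1) (\<lambda>l. (2::real) ^ l)"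
    by simp
  also have "measure_pmf.expectation (ac_loop f N 1) (\<lambda>l. (2::real) ^ l) \<le> 16 * s"
  proof -
    have "measure_pmf.expectation (ac_loop f N 1) (\<lambda>l. (2::real) ^ l)
       \<le> (if (2::real) ^ 1 < 2 / sin (th f N) then 12 / sin (th f N) - 2 ^ 1 else 2 * 2 ^ 1)"
      by (rule exp_upper[OF N t])
    also have "\<dots> \<le> 16 * s" unfolding s_def[symmetric] using s1 by (auto simp: s_def field_simps)
    finally show ?thesis .
  qed
  hence "(3 + 20 * pi\<^sup>2) / \<epsilon> * measure_pmf.expectation (ac_loop f N 1) (\<lambda>l. (2::real) ^ l)
      \<le> (3 + 20 * pi\<^sup>2) / \<epsilon> * (16 * s)" using eps by (intro mult_left_mono) auto
  finally show "measure_pmf.expectation (approx_count f N \<epsilon>) (\<lambda>r. real (ac_evals r))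
           \<le> (16 * (3 + 20 * pi\<^sup>2)) * (1 / \<epsilon>) * sqrt (real N / real (num_sol f N))"
    unfolding E sq by (simp add: field_simps)
  define \<theta> where "\<theta> = th f N"
  have th0: "0 < \<theta>" unfolding \<theta>_def using th_pos[of N 1 f] N t by simp
  have thpi: "\<theta> \<le> pi / 2" unfolding \<theta>_def by (rule th_bounds(2)[OF N])
  have sth: "\<theta> / 2 \<le> sin \<theta>" using th0 thpi by (intro sin_ge_half) auto
  define B where "B = {L. 2 ^ L * th f N < 1}"
  define a where "a = 20 * pi\<^sup>2 / (\<epsilon> * \<theta>)"
  have pt: "a * (1 - indicator B l) \<le> evn \<epsilon> l" for l
  proof (cases "l \<in> B")
    case True
    have "0 \<le> evn \<epsilon> l" unfolding evn_def by (rule add_nonneg_nonneg) (rule of_nat_0_le_iff)+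
    thus ?thesis using True by simp
  next
    case False
    hence g: "1 \<le> 2 ^ l * \<theta>" unfolding B_def \<theta>_def by simp
    have "a = 20 * pi\<^sup>2 / \<epsilon> * (1 / \<theta>)" unfolding a_def by simp
    also have "\<dots> \<le> 20 * pi\<^sup>2 / \<epsilon> * 2 ^ l" using g th0 eps
      by (intro mult_left_mono) (auto simp: field_simps)
    also have "\<dots> \<le> evn \<epsilon> l" by (rule evn_lower[OF eps(1)])
    finally show ?thesis using False by simp
  qed
  have "a * (1 - measure_pmf.prob (ac_loop f N 1) B) \<le> measure_pmf.expectation (ac_loop f N 1) (evn \<epsilon>)"
    by (rule exp_lin_ind[OF ac_support_finite pt])
  moreover have "measure_pmf.prob (ac_loop f N 1) B \<le> 4/9"
  proof -
    have "measure_pmf.prob (ac_loop f N 1) B \<le> (if 2 ^ 1 * th f N < 1 then (4 * 1^2 - (2 ^ 1 * th f N)^2) / 9 else 0)"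
      unfolding B_def by (rule bad_bound[OF N t]) auto
    moreover have "(if 2 ^ 1 * th f N < 1 then (4 * 1^2 - (2 ^ 1 * th f N)^2) / 9 else 0) \<le> (4/9::real)"
    proof -
      have "(4 * 1^2 - (2 ^ 1 * th f N)^2) / 9 \<le> (4/9::real)" by simp
      thus ?thesis by simp
    qed
    ultimately show ?thesis by (rule order_trans)
  qed
  moreover have "1 * (1 / \<epsilon>) * s \<le> a * (5/9)"
  proof -
    have "1 / \<theta> \<ge> s / 2" unfolding s_def \<theta>_def[symmetric] using sth th0 by (simp add: field_simps)
    hence "20 * pi\<^sup>2 / \<epsilon> * (s / 2) * (5/9) \<le> 20 * pi\<^sup>2 / \<epsilon> * (1 / \<theta>) * (5/9)"
      using eps by (intro mult_right_mono mult_left_mono) auto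
    moreover have "a * (5/9) = 20 * pi\<^sup>2 / \<epsilon> * (1 / \<theta>) * (5/9)" unfolding a_def by simp
    ultimately have "a * (5/9) \<ge> 20 * pi\<^sup>2 / \<epsilon> * (s / 2) * (5/9)" by linarith
    moreover have "1 * (1 / \<epsilon>) * s \<le> 20 * pi\<^sup>2 / \<epsilon> * (s / 2) * (5/9)"
    proof -
      have "3 * 3 \<le> pi * pi" using pi_gt3 by (intro mult_mono) auto
      hence "1 \<le> 20 * pi\<^sup>2 / 2 * (5/9)" by (simp add: power2_eq_square)
      hence "1 * (1 / \<epsilon> * s) \<le> 20 * pi\<^sup>2 / 2 * (5/9) * (1 / \<epsilon> * s)"
        using eps s1 by (intro mult_right_mono) auto
      thus ?thesis by (simp add: field_simps)
    qed
    ultimately show ?thesis by linarith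
  qed
  moreover have "0 \<le> a" unfolding a_def using eps th0 by simp
  ultimately have "1 * (1 / \<epsilon>) * s \<le> measure_pmf.expectation (ac_loop f N 1) (evn \<epsilon>)"
  proof -
    assume a1: "a * (1 - measure_pmf.prob (ac_loop f N 1) B) \<le> measure_pmf.expectation (ac_loop f N 1) (evn \<epsilon>)"
      and a2: "measure_pmf.prob (ac_loop f N 1) B \<le> 4/9" and a3: "1 * (1 / \<epsilon>) * s \<le> a * (5/9)" and a4: "0 \<le> a"
    have "a * (5/9) \<le> a * (1 - measure_pmf.prob (ac_loop f N 1) B)" using a2 a4 by (intro mult_left_mono) auto
    thus ?thesis using a1 a3 by linarith
  qed
  thus "1 * (1 / \<epsilon>) * sqrt (real N / real (num_sol f N))
           \<le> measure_pmf.expectation (approx_count f N \<epsilon>) (\<lambda>r. real (ac_evals r))"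
    unfolding E sq .
qed


declare ac_loop.simps[simp del]

lemma approx_set_t0:
  assumes N: "0 < N" and t: "tt f N = 0" and eps: "0 < \<epsilon>"
  shows "set_pmf (approx_count f N \<epsilon>) = (\<lambda>l. (l, Mf \<epsilon> l, 0)) ` set_pmf (ac_loop f N 1)"
proof -
  have "\<And>l. set_pmf (count_pmf f N (Mf \<epsilon> l)) = {0}"
    using count_support_t0[OF N _ t] Mf_bounds(3)[OF eps] by blast
  thus ?thesis unfolding approx_alt by (auto simp: set_bind_pmf)
qed

lemma rnd0:
  fixes rnd :: "real \<Rightarrow> int"
  assumes rnd: "\<forall>x. \<bar>real_of_int (rnd x) - x\<bar> \<le> 2/3"
  shows "rnd 0 = 0"
proof -
  have "\<bar>real_of_int (rnd 0)\<bar> \<le> 2/3" using rnd[rule_format, of 0] by simp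
  hence "\<bar>rnd 0\<bar> < 1" by linarith
  thus ?thesis by linarith
qed

lemma claimC:
  fixes rnd :: "real \<Rightarrow> int"
  assumes rnd: "\<forall>x. \<bar>real_of_int (rnd x) - x\<bar> \<le> 2/3"
    and N: "0 < N" and t: "tt f N = 0" and eps: "0 < \<epsilon>"
  shows "\<forall>(l, M, y) \<in> set_pmf (approx_count f N \<epsilon>). rnd (count_est N M y) = 0"
  unfolding approx_set_t0[OF N t eps] using rnd0[OF rnd] by (auto simp: count_est_def)

lemma claimD:
  assumes N: "0 < N" and t: "tt f N = 0" and eps: "0 < \<epsilon>" "\<epsilon> \<le> 1"
    and r: "r \<in> set_pmf (approx_count f N \<epsilon>)"
  shows "1 * sqrt (real N) \<le> real (ac_evals r) \<and> real (ac_evals r) \<le> (4 * (2 + 20 * pi\<^sup>2 / \<epsilon>) + 1) * sqrt (real N)"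
proof -
  obtain l where l: "l \<in> set_pmf (ac_loop f N 1)" and r: "r = (l, Mf \<epsilon> l, 0)"
    using r unfolding approx_set_t0[OF N t eps(1)] by auto
  have sN: "1 \<le> sqrt (real N)" using N by simp
  have b: "2 * sqrt (real N) \<le> 2 ^ l" "(2::real) ^ l \<le> max (2 ^ 1) (4 * sqrt (real N))"
    using ac_support_t0[OF N t l] by auto
  hence b2: "(2::real) ^ l \<le> 4 * sqrt (real N)" using sN by auto
  have ev: "real (ac_evals r) = evn \<epsilon> l" unfolding r ac_evals_def evn_def by simp
  have "1 * sqrt (real N) \<le> 20 * pi\<^sup>2 / \<epsilon> * 2 ^ l"
  proof -
    have "3 * 3 \<le> pi * pi" using pi_gt3 by (intro mult_mono) auto
    hence p: "1 \<le> 20 * pi\<^sup>2 / \<epsilon>" using eps by (simp add: power2_eq_square field_simps)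
    have "sqrt (real N) \<le> 2 ^ l" using b(1) sN by linarith
    hence "1 * sqrt (real N) \<le> 1 * 2 ^ l" by simp
    also have "\<dots> \<le> 20 * pi\<^sup>2 / \<epsilon> * 2 ^ l" using p by (intro mult_right_mono) auto
    finally show ?thesis .
  qed
  also have "\<dots> \<le> evn \<epsilon> l" by (rule evn_lower[OF eps(1)])
  finally have lo: "1 * sqrt (real N) \<le> evn \<epsilon> l" .
  have "evn \<epsilon> l \<le> 2 * 2 ^ l + (20 * pi\<^sup>2 / \<epsilon> * 2 ^ l + 1)"
    unfolding evn_def using sum_pow2_bound[of l] Mf_bounds(2)[OF eps(1), of l] by linarith
  also have "\<dots> = (2 + 20 * pi\<^sup>2 / \<epsilon>) * 2 ^ l + 1" by (simp add: algebra_simps)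
  also have "\<dots> \<le> (2 + 20 * pi\<^sup>2 / \<epsilon>) * (4 * sqrt (real N)) + 1 * sqrt (real N)"
    using b2 sN eps by (intro add_mono mult_left_mono) auto
  also have "\<dots> = (4 * (2 + 20 * pi\<^sup>2 / \<epsilon>) + 1) * sqrt (real N)" by (simp add: algebra_simps)
  finally show ?thesis using lo ev by simp
qed

lemma claimA_t0:
  fixes rnd :: "real \<Rightarrow> int"
  assumes rnd: "\<forall>x. \<bar>real_of_int (rnd x) - x\<bar> \<le> 2/3"
    and N: "0 < N" and t: "tt f N = 0" and eps: "0 < \<epsilon>"
  shows "2/3 \<le> measure_pmf.prob (approx_count f N \<epsilon>)
         {(l, M, y). \<bar>real_of_int (rnd (count_est N M y)) - real (num_sol f N)\<bar>
                       \<le> \<epsilon> * real (num_sol f N)}" (is "_ \<le> measure_pmf.prob _ ?S")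
proof -
  have ns: "num_sol f N = 0" using t unfolding tt_def[OF N] by simp
  have "set_pmf (approx_count f N \<epsilon>) \<subseteq> ?S"
    using claimC[OF rnd N t eps] unfolding ns by auto
  hence "measure_pmf.prob (approx_count f N \<epsilon>) ?S = 1"
    by (subst measure_pmf.prob_eq_1) (auto simp: AE_measure_pmf_iff)
  thus ?thesis by simp
qed

theorem theorem8:
  fixes rnd :: "real \<Rightarrow> int"
  assumes rnd: "\<forall>x. \<bar>real_of_int (rnd x) - x\<bar> \<le> 2/3"
  shows
   "(\<forall>N f \<epsilon>. N \<ge> 1 \<and> 0 < \<epsilon> \<and> \<epsilon> \<le> 1 \<longrightarrow>
       measure_pmf.prob (approx_count f N \<epsilon>)
         {(l, M, y). \<bar>real_of_int (rnd (count_est N M y)) - real (num_sol f N)\<bar>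
                       \<le> \<epsilon> * real (num_sol f N)} \<ge> 2/3)
  \<and> (\<exists>c1 c2. 0 < c1 \<and> 0 < c2 \<and>
       (\<forall>N f \<epsilon>. N \<ge> 1 \<and> 0 < \<epsilon> \<and> \<epsilon> \<le> 1 \<and> num_sol f N > 0 \<longrightarrow>
          c1 * (1 / \<epsilon>) * sqrt (real N / real (num_sol f N))
            \<le> measure_pmf.expectation (approx_count f N \<epsilon>) (\<lambda>r. real (ac_evals r))
        \<and> measure_pmf.expectation (approx_count f N \<epsilon>) (\<lambda>r. real (ac_evals r))
            \<le> c2 * (1 / \<epsilon>) * sqrt (real N / real (num_sol f N))))
  \<and> (\<forall>N f \<epsilon>. N \<ge> 1 \<and> 0 < \<epsilon> \<and> \<epsilon> \<le> 1 \<and> num_sol f N = 0 \<longrightarrow>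
       (\<forall>(l, M, y) \<in> set_pmf (approx_count f N \<epsilon>). rnd (count_est N M y) = 0))
  \<and> (\<forall>\<epsilon>. 0 < \<epsilon> \<and> \<epsilon> \<le> 1 \<longrightarrow>
       (\<exists>c1 c2. 0 < c1 \<and> 0 < c2 \<and>
         (\<forall>N f. N \<ge> 1 \<and> num_sol f N = 0 \<longrightarrow>
            (\<forall>r \<in> set_pmf (approx_count f N \<epsilon>).
               c1 * sqrt (real N) \<le> real (ac_evals r) \<and> real (ac_evals r) \<le> c2 * sqrt (real N)))))"
proof (intro conjI)
  show "\<forall>N f \<epsilon>. N \<ge> 1 \<and> 0 < \<epsilon> \<and> \<epsilon> \<le> 1 \<longrightarrow>
       measure_pmf.prob (approx_count f N \<epsilon>)
         {(l, M, y). \<bar>real_of_int (rnd (count_est N M y)) - real (num_sol f N)\<bar>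
                       \<le> \<epsilon> * real (num_sol f N)} \<ge> 2/3"
  proof (intro allI impI)
    fix N f \<epsilon> assume a: "N \<ge> (1::nat) \<and> 0 < \<epsilon> \<and> \<epsilon> \<le> (1::real)"
    hence N: "0 < N" by simp
    show "measure_pmf.prob (approx_count f N \<epsilon>)
         {(l, M, y). \<bar>real_of_int (rnd (count_est N M y)) - real (num_sol f N)\<bar>
                       \<le> \<epsilon> * real (num_sol f N)} \<ge> 2/3"
    proof (cases "tt f N = 0")
      case True thus ?thesis using claimA_t0[OF rnd N True] a by simp
    next
      case False
      hence "0 < tt f N" using tt_ge[OF N, of f] by simp
      thus ?thesis using claimA_pos[OF rnd N] a by simp
    qed
  qed
  show "\<exists>c1 c2. 0 < c1 \<and> 0 < c2 \<and>
       (\<forall>N f \<epsilon>. N \<ge> 1 \<and> 0 < \<epsilon> \<and> \<epsilon> \<le> 1 \<and> num_sol f N > 0 \<longrightarrow>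
          c1 * (1 / \<epsilon>) * sqrt (real N / real (num_sol f N))
            \<le> measure_pmf.expectation (approx_count f N \<epsilon>) (\<lambda>r. real (ac_evals r))
        \<and> measure_pmf.expectation (approx_count f N \<epsilon>) (\<lambda>r. real (ac_evals r))
            \<le> c2 * (1 / \<epsilon>) * sqrt (real N / real (num_sol f N)))"
  proof -
    define C :: real where "C = 16 * (3 + 20 * pi\<^sup>2)"
    have C: "0 < C" unfolding C_def by (simp add: add_pos_nonneg)
    have H: "\<forall>N f \<epsilon>. N \<ge> 1 \<and> 0 < \<epsilon> \<and> \<epsilon> \<le> 1 \<and> num_sol f N > 0 \<longrightarrow>
          1 * (1 / \<epsilon>) * sqrt (real N / real (num_sol f N))
            \<le> measure_pmf.expectation (approx_count f N \<epsilon>) (\<lambda>r. real (ac_evals r))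
        \<and> measure_pmf.expectation (approx_count f N \<epsilon>) (\<lambda>r. real (ac_evals r))
            \<le> C * (1 / \<epsilon>) * sqrt (real N / real (num_sol f N))"
    proof (intro allI impI)
      fix N f \<epsilon> assume a: "N \<ge> (1::nat) \<and> 0 < \<epsilon> \<and> \<epsilon> \<le> (1::real) \<and> num_sol f N > 0"
      hence N: "0 < N" by simp
      have t: "0 < tt f N" using a unfolding tt_def[OF N] by simp
      show "1 * (1 / \<epsilon>) * sqrt (real N / real (num_sol f N))
            \<le> measure_pmf.expectation (approx_count f N \<epsilon>) (\<lambda>r. real (ac_evals r))
        \<and> measure_pmf.expectation (approx_count f N \<epsilon>) (\<lambda>r. real (ac_evals r))
            \<le> C * (1 / \<epsilon>) * sqrt (real N / real (num_sol f N))"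
        using claimB[OF N t] a unfolding C_def by simp
    qed
    show ?thesis using H C by (intro exI[of _ "1::real"] exI[of _ C]) simp
  qed
  show "\<forall>N f \<epsilon>. N \<ge> 1 \<and> 0 < \<epsilon> \<and> \<epsilon> \<le> 1 \<and> num_sol f N = 0 \<longrightarrow>
       (\<forall>(l, M, y) \<in> set_pmf (approx_count f N \<epsilon>). rnd (count_est N M y) = 0)"
  proof (intro allI impI)
    fix N f \<epsilon> assume a: "N \<ge> (1::nat) \<and> 0 < \<epsilon> \<and> \<epsilon> \<le> (1::real) \<and> num_sol f N = 0"
    hence N: "0 < N" by simp
    have t: "tt f N = 0" using a unfolding tt_def[OF N] by simp
    show "\<forall>(l, M, y) \<in> set_pmf (approx_count f N \<epsilon>). rnd (count_est N M y) = 0"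
      by (rule claimC[OF rnd N t]) (use a in simp)
  qed
  show "\<forall>\<epsilon>. 0 < \<epsilon> \<and> \<epsilon> \<le> 1 \<longrightarrow>
       (\<exists>c1 c2. 0 < c1 \<and> 0 < c2 \<and>
         (\<forall>N f. N \<ge> 1 \<and> num_sol f N = 0 \<longrightarrow>
            (\<forall>r \<in> set_pmf (approx_count f N \<epsilon>).
               c1 * sqrt (real N) \<le> real (ac_evals r) \<and> real (ac_evals r) \<le> c2 * sqrt (real N))))"
  proof (intro allI impI)
    fix \<epsilon> :: real assume e: "0 < \<epsilon> \<and> \<epsilon> \<le> 1"
    show "\<exists>c1 c2. 0 < c1 \<and> 0 < c2 \<and>
         (\<forall>N f. N \<ge> 1 \<and> num_sol f N = 0 \<longrightarrow>
            (\<forall>r \<in> set_pmf (approx_count f N \<epsilon>).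
               c1 * sqrt (real N) \<le> real (ac_evals r) \<and> real (ac_evals r) \<le> c2 * sqrt (real N)))"
    proof -
      define C :: real where "C = 4 * (2 + 20 * pi\<^sup>2 / \<epsilon>) + 1"
      have C: "0 < C" unfolding C_def using e by (simp add: add_pos_nonneg)
      have H: "\<forall>N f. N \<ge> 1 \<and> num_sol f N = 0 \<longrightarrow>
            (\<forall>r \<in> set_pmf (approx_count f N \<epsilon>).
               1 * sqrt (real N) \<le> real (ac_evals r) \<and> real (ac_evals r) \<le> C * sqrt (real N))"
      proof (intro allI impI ballI)
        fix N f r assume a: "N \<ge> (1::nat) \<and> num_sol f N = 0" and r: "r \<in> set_pmf (approx_count f N \<epsilon>)"
        hence N: "0 < N" by simp
        have t: "tt f N = 0" using a unfolding tt_def[OF N] by simp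
        show "1 * sqrt (real N) \<le> real (ac_evals r) \<and> real (ac_evals r) \<le> C * sqrt (real N)"
          using claimD[OF N t _ _ r] e unfolding C_def by simp
      qed
      show ?thesis using H C by (intro exI[of _ "1::real"] exI[of _ C]) simp
    qed
  qed
qed


end
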